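(* Let $u(t)$ be a (twice continuously differentiable in $t$) vector of grid values on the reference grid satisfying the semidiscrete scheme $$J a\,\ddot{u} = \mathbb{D}_{jk}(\alpha_{ijik} b)\,u + \mathrm{SAT},$$ where $\mathrm{SAT}=\mathrm{SAT}(t)$ is an arbitrary vector of grid values (summation over $i,j,k$). Then $$\frac{dE}{dt} = \langle \dot u,\, b D_{\hat n} u\rangle_{\Gamma',h} + \dot u^T H\,\mathrm{SAT}.$$ In particular, with the Neumann penalty $$\mathrm{SAT} = -H^{-1}\sum_{f\in F} e_f\,\gamma\,H_f\, b\,\big(e_f^T D_{\hat n} u - 0\big)$$ (all coefficients evaluated on face $f$, and $D_{\hat n}$ formed with the normal of face $f$), one has $\frac{dE}{dt}=0$, and $E\ge 0$ for all $u,\dot u$.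
   Context: Summation convention: repeated subscript indices are summed from $1$ to $d$ unless "no sum" is stated. Every grid function (coefficient) is identified with the diagonal matrix of its grid values. One-dimensional SBP operators: on an equidistant grid of $N$ points with spacing $h$, let $e_\ell=(1,0,\dots,0)^T$, $e_r=(0,\dots,0,1)^T$, $H_\xi = h\,\mathrm{diag}(w_1,\dots,w_s,1,\dots,1,w_s,\dots,w_1)$ with all $w_i>0$, and $\theta_H:=w_1$. $D_\xi$ is an $N\times N$ matrix with $H_\xi D_\xi + D_\xi^T H_\xi = -e_\ell e_\ell^T + e_r e_r^T$; $\hat D_\xi$ is another $N\times N$ matrix and $\Delta D_\xi = D_\xi-\hat D_\xi$. For each grid function $c$, $D_{\xi\xi}(c)$ and $R_{\xi\xi}(c)$ are $N\times N$ matrices with $H_\xi D_{\xi\xi}(c) = -D_\xi^T H_\xi c D_\xi - R_{\xi\xi}(c) - e_\ell c_\ell e_\ell^T \hat D_\xi + e_r c_r e_r^T\hat D_\xi$ ($c_\ell,c_r$ the endpoint values of $c$), where $R_{\xi\xi}(c)$ depends linearly on $c$ and is symmetric positive semidefinite whenever $c\ge 0$ entrywise. Multi-dimensional operators: the reference domain $\Omega=[0,1]^d$ carries the tensor-product grid with $N$ points and spacing $h$ in each direction. $D_i$, $\hat D_i$, $H_i$ are the Kronecker products $I\otimes\cdots\otimes X\otimes\cdots\otimes I$ with $X=D_\xi,\hat D_\xi,H_\xi$ respectively in the $i$th factor; $\Delta D_i=D_i-\hat D_i$; $H=H_\xi\otimes\cdots\otimes H_\xi$ ($d$ factors). For a grid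 function $c$, $D_{ii}(c)$ (resp. $\widetilde R_{ii}(c)$) applies $D_{\xi\xi}$ (resp. $R_{\xi\xi}$), with $c$ restricted to the line, along every grid line in direction $i$, and $R_{ii}(c)=H_i^{-1}H\widetilde R_{ii}(c)$. Define $\mathbb D_{jk}(c)=D_{jj}(c)$ if $j=k$ and $\mathbb D_{jk}(c)=D_j c D_k$ if $j\ne k$. Faces: $\Gamma_i^-=\{\xi_i=0\}$, $\Gamma_i^+=\{\xi_i=1\}$, $F$ the set of all $2d$ faces. For $f\in F$, $e_f$ is the restriction matrix such that $e_f^Tu$ is the vector of values of $u$ at the grid points of $f$; for $f=\Gamma_i^\pm$, $H_f$ is the Kronecker product of $d-1$ copies of $H_\xi$ (direction $i$ omitted), and $\nu=(\nu_1,\dots,\nu_d)$ is the outward unit normal of $f$ in reference coordinates ($\nu_i=\pm1$, other components $0$). Discrete forms: $\langle u,v\rangle_{\Omega,h}=u^THv$, $\langle u,v\rangle_{\Gamma,h}=\sum_{f\in F}(e_f^Tu)^TH_f(e_f^Tv)$, where in the term for face $f$ every occurrence of $\nu$ or of face-dependent quantities refers to face $f$ (also at edge and corner points); $\|u\|^2_{\Omega,h}=\langle u,u\rangle_{\Omega,h}$, $\|u\|^2_{\Gamma,h}=\langle u,u\rangle_{\Gamma,h}$. Geometry and coefficients: a smooth bijection $\vec x(\vec\xi)$ from $\Omega$ onto the physical domain $\Omega'$; $\mathcal J_{ij}=\partial x_j/\partial\xi_i$, $J=\det\mathcal J>0$, $\mathcal K_{ij}=\partial\xi_j/\partial x_i$;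 $\gamma>0$ on $\partial\Omega$ is defined by $d\Gamma'=\gamma\,d\Gamma$ (surface element ratio); $a>0$, $b>0$ are coefficient functions; all are evaluated at grid points and regarded as diagonal matrices. $\alpha_{ijkl}=\mathcal K_{ij}J\mathcal K_{kl}$. Physical forms: $\langle u,v\rangle_{\Omega',h}=\langle u,Jv\rangle_{\Omega,h}$, $\langle u,v\rangle_{\Gamma',h}=\langle u,\gamma v\rangle_{\Gamma,h}$, with associated squared (semi)norms. $D_{x_i}=\mathcal K_{ij}D_j$. The discrete normal derivative (used at boundary points, face by face) is $D_{\hat n}=\nu_j\frac{\alpha_{ijik}}{\gamma}D_k-\sum_k\nu_k\frac{\alpha_{ikik}}{\gamma}\Delta D_k$. Let $\eta_k=\alpha_{ikik}b$ (sum over $i$, no sum over $k$). The discrete energy is $$E=\tfrac12\|\sqrt a\,\dot u\|^2_{\Omega',h}+\tfrac12\sum_i\|\sqrt b\,D_{x_i}u\|^2_{\Omega',h}+\tfrac12\sum_k u^TR_{kk}(\eta_k)u.$$ All coefficients are time-independent. *)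

theory Defs
  imports Complex_Main
begin

text \<open>Directions are numbered 0,...,d-1 (the paper uses 1,...,d); grid
indices in each direction are 0,...,N-1.  A grid point of the tensor-product grid on
[0,1]^d is a function p :: nat => nat with p i < N for i < d and p i = 0 for i >= d.
Grid functions are functions on grid points; matrices over the grid are functions of
two grid points (only their values on the grid matter).  One-dimensional matrices are
functions nat => nat => real, only entries with indices < N matter.\<close>

type_synonym gpt = "nat \<Rightarrow> nat"
type_synonym gfun = "gpt \<Rightarrow> real"
type_synonym gmat = "gpt \<Rightarrow> gpt \<Rightarrow> real"
type_synonym mat1 = "nat \<Rightarrow> nat \<Rightarrow> real"
type_synonym face = "nat \<times> bool"   \<comment> \<open>(i, False) = Gamma_i^-, (i, True) = Gamma_i^+\<close>

definition grid :: "nat \<Rightarrow> nat \<Rightarrow> gpt set" where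
  "grid d N = {p. (\<forall>i<d. p i < N) \<and> (\<forall>i. d \<le> i \<longrightarrow> p i = 0)}"

definition sbp_norm :: "nat \<Rightarrow> real \<Rightarrow> mat1 \<Rightarrow> bool" where
  "sbp_norm N h Hx \<longleftrightarrow> (\<exists>s w. 2 * s \<le> N \<and> (\<forall>k<s. (0::real) < w k) \<and>
     (\<forall>k<N. \<forall>l<N. Hx k l = (if k = l then h * (if k < s then w k
                                           else if N - 1 - k < s then w (N - 1 - k) else 1)
                               else 0)))"

definition sbp_first :: "nat \<Rightarrow> mat1 \<Rightarrow> mat1 \<Rightarrow> bool" where
  "sbp_first N Hx D \<longleftrightarrow> (\<forall>k<N. \<forall>l<N.
     (\<Sum>m<N. Hx k m * D m l) + (\<Sum>m<N. D m k * Hx m l)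
       = (if k = 0 \<and> l = 0 then -1 else 0) + (if k = N - 1 \<and> l = N - 1 then 1 else 0))"

definition sbp_second :: "nat \<Rightarrow> mat1 \<Rightarrow> mat1 \<Rightarrow> mat1 \<Rightarrow> ((nat \<Rightarrow> real) \<Rightarrow> mat1)
                         \<Rightarrow> ((nat \<Rightarrow> real) \<Rightarrow> mat1) \<Rightarrow> bool" where
  "sbp_second N Hx D Dh Dxx R \<longleftrightarrow> (\<forall>c. \<forall>k<N. \<forall>l<N.
     (\<Sum>m<N. Hx k m * Dxx c m l)
       = - (\<Sum>m<N. \<Sum>n<N. D m k * Hx m n * c n * D n l) - R c k l
         - (if k = 0 then c 0 * Dh 0 l else 0)
         + (if k = N - 1 then c (N - 1) * Dh (N - 1) l else 0))"

definition rem_linear :: "nat \<Rightarrow> ((nat \<Rightarrow> real) \<Rightarrow> mat1) \<Rightarrow> bool" where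
  "rem_linear N R \<longleftrightarrow> (\<forall>c1 c2 x y. \<forall>k<N. \<forall>l<N.
     R (\<lambda>m. x * c1 m + y * c2 m) k l = x * R c1 k l + y * R c2 k l)"

definition rem_psd :: "nat \<Rightarrow> ((nat \<Rightarrow> real) \<Rightarrow> mat1) \<Rightarrow> bool" where
  "rem_psd N R \<longleftrightarrow> (\<forall>c. (\<forall>m<N. 0 \<le> c m) \<longrightarrow>
     (\<forall>k<N. \<forall>l<N. R c k l = R c l k) \<and>
     (\<forall>v. 0 \<le> (\<Sum>k<N. \<Sum>l<N. v k * R c k l * v l)))"

definition dg :: "gfun \<Rightarrow> gmat" where
  "dg c p q = (if p = q then c p else 0)"

definition mmul :: "gpt set \<Rightarrow> gmat \<Rightarrow> gmat \<Rightarrow> gmat" where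
  "mmul G A B p q = (\<Sum>r\<in>G. A p r * B r q)"

definition mvec :: "gpt set \<Rightarrow> gmat \<Rightarrow> gfun \<Rightarrow> gfun" where
  "mvec G A v p = (\<Sum>q\<in>G. A p q * v q)"

definition dinv :: "gmat \<Rightarrow> gmat" where
  "dinv A p q = (if p = q then 1 / A p p else 0)"

text \<open>I x ... x X x ... x I with X in the i-th factor.\<close>
definition kdir :: "nat \<Rightarrow> mat1 \<Rightarrow> gmat" where
  "kdir i X p q = (if (\<forall>j. j \<noteq> i \<longrightarrow> p j = q j) then X (p i) (q i) else 0)"

text \<open>X x ... x X (d factors).\<close>
definition kall :: "nat \<Rightarrow> mat1 \<Rightarrow> gmat" where
  "kall d X p q = (\<Prod>j<d. X (p j) (q j))"

definition gline :: "nat \<Rightarrow> nat \<Rightarrow> gfun \<Rightarrow> gpt \<Rightarrow> nat \<Rightarrow> real" where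
  "gline N i c p k = (if k < N then c (p(i := k)) else 0)"

text \<open>Apply the one-dimensional coefficient-dependent operator Op(c) along every grid line in
  direction i (c restricted to the line).\<close>
definition dline :: "nat \<Rightarrow> nat \<Rightarrow> ((nat \<Rightarrow> real) \<Rightarrow> mat1) \<Rightarrow> gfun \<Rightarrow> gmat" where
  "dline N i Op c p q = (if (\<forall>j. j \<noteq> i \<longrightarrow> p j = q j) then Op (gline N i c p) (p i) (q i) else 0)"

definition Rdir :: "nat \<Rightarrow> nat \<Rightarrow> mat1 \<Rightarrow> ((nat \<Rightarrow> real) \<Rightarrow> mat1) \<Rightarrow> nat \<Rightarrow> gfun \<Rightarrow> gmat" where
  "Rdir d N Hx R i c = mmul (grid d N) (mmul (grid d N) (dinv (kdir i Hx)) (kall d Hx)) (dline N i R c)"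

definition DDjk :: "nat \<Rightarrow> nat \<Rightarrow> mat1 \<Rightarrow> ((nat \<Rightarrow> real) \<Rightarrow> mat1) \<Rightarrow> nat \<Rightarrow> nat \<Rightarrow> gfun \<Rightarrow> gmat" where
  "DDjk d N D Dxx j k c = (if j = k then dline N j Dxx c
      else mmul (grid d N) (mmul (grid d N) (kdir j D) (dg c)) (kdir k D))"

definition faces :: "nat \<Rightarrow> face set" where
  "faces d = {..<d} \<times> UNIV"

definition facepts :: "nat \<Rightarrow> nat \<Rightarrow> face \<Rightarrow> gpt set" where
  "facepts d N f = {p \<in> grid d N. p (fst f) = (if snd f then N - 1 else 0)}"

text \<open>Restriction matrix e_f (rows: grid points, columns: points of face f).\<close>
definition ef :: "nat \<Rightarrow> nat \<Rightarrow> face \<Rightarrow> gmat" where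
  "ef d N f p q = (if p = q \<and> q \<in> facepts d N f then 1 else 0)"

definition ftr :: "nat \<Rightarrow> nat \<Rightarrow> face \<Rightarrow> gfun \<Rightarrow> gfun" where
  "ftr d N f u q = (\<Sum>p\<in>grid d N. ef d N f p q * u p)"

definition fext :: "nat \<Rightarrow> nat \<Rightarrow> face \<Rightarrow> gfun \<Rightarrow> gfun" where
  "fext d N f w p = (\<Sum>q\<in>facepts d N f. ef d N f p q * w q)"

text \<open>H_f: Kronecker product of d-1 copies of H_xi, direction fst f omitted.\<close>
definition Hf :: "nat \<Rightarrow> mat1 \<Rightarrow> face \<Rightarrow> gmat" where
  "Hf d Hx f p q = (\<Prod>j\<in>{..<d} - {fst f}. Hx (p j) (q j))"

definition nu :: "face \<Rightarrow> nat \<Rightarrow> real" where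
  "nu f j = (if j = fst f then (if snd f then 1 else -1) else 0)"

definition bform :: "nat \<Rightarrow> nat \<Rightarrow> mat1 \<Rightarrow> (face \<Rightarrow> gfun) \<Rightarrow> (face \<Rightarrow> gfun) \<Rightarrow> real" where
  "bform d N Hx U V = (\<Sum>f\<in>faces d. \<Sum>q\<in>facepts d N f. \<Sum>q'\<in>facepts d N f.
       ftr d N f (U f) q * Hf d Hx f q q' * ftr d N f (V f) q')"

text \<open>Physical boundary form <u,v>_{Gamma',h} = <u, gamma v>_{Gamma,h}.\<close>
definition bformP :: "nat \<Rightarrow> nat \<Rightarrow> mat1 \<Rightarrow> (face \<Rightarrow> gfun) \<Rightarrow> (face \<Rightarrow> gfun) \<Rightarrow> (face \<Rightarrow> gfun) \<Rightarrow> real" where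
  "bformP d N Hx gam U V = bform d N Hx U (\<lambda>f p. gam f p * V f p)"

definition qf :: "gpt set \<Rightarrow> gfun \<Rightarrow> gmat \<Rightarrow> gfun \<Rightarrow> real" where
  "qf G u A v = (\<Sum>p\<in>G. \<Sum>q\<in>G. u p * A p q * v q)"

text \<open>Physical volume form <u,v>_{Omega',h} = <u, J v>_{Omega,h} = u^T H J v.\<close>
definition vformP :: "nat \<Rightarrow> nat \<Rightarrow> mat1 \<Rightarrow> gfun \<Rightarrow> gfun \<Rightarrow> gfun \<Rightarrow> real" where
  "vformP d N Hx J u v = qf (grid d N) u (kall d Hx) (\<lambda>p. J p * v p)"

definition Dx :: "nat \<Rightarrow> nat \<Rightarrow> mat1 \<Rightarrow> (nat \<Rightarrow> nat \<Rightarrow> gfun) \<Rightarrow> nat \<Rightarrow> gfun \<Rightarrow> gfun" where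
  "Dx d N D K i u p = (\<Sum>j<d. K i j p * mvec (grid d N) (kdir j D) u p)"

definition alpha :: "(nat \<Rightarrow> nat \<Rightarrow> gfun) \<Rightarrow> gfun \<Rightarrow> nat \<Rightarrow> nat \<Rightarrow> nat \<Rightarrow> nat \<Rightarrow> gfun" where
  "alpha K J i j k l p = K i j p * J p * K k l p"

definition Dn :: "nat \<Rightarrow> nat \<Rightarrow> mat1 \<Rightarrow> mat1 \<Rightarrow> (nat \<Rightarrow> nat \<Rightarrow> gfun) \<Rightarrow> gfun \<Rightarrow> (face \<Rightarrow> gfun)
                 \<Rightarrow> face \<Rightarrow> gfun \<Rightarrow> gfun" where
  "Dn d N D Dh K J gam f u p =
     (\<Sum>i<d. \<Sum>j<d. \<Sum>k<d. nu f j * alpha K J i j i k p / gam f p * mvec (grid d N) (kdir k D) u p)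
     - (\<Sum>k<d. nu f k * (\<Sum>i<d. alpha K J i k i k p) / gam f p
              * mvec (grid d N) (kdir k (\<lambda>m n. D m n - Dh m n)) u p)"

definition eta :: "nat \<Rightarrow> (nat \<Rightarrow> nat \<Rightarrow> gfun) \<Rightarrow> gfun \<Rightarrow> gfun \<Rightarrow> nat \<Rightarrow> gfun" where
  "eta d K J b k p = (\<Sum>i<d. alpha K J i k i k p) * b p"

definition energy :: "nat \<Rightarrow> nat \<Rightarrow> mat1 \<Rightarrow> mat1 \<Rightarrow> ((nat \<Rightarrow> real) \<Rightarrow> mat1)
     \<Rightarrow> (nat \<Rightarrow> nat \<Rightarrow> gfun) \<Rightarrow> gfun \<Rightarrow> gfun \<Rightarrow> gfun \<Rightarrow> gfun \<Rightarrow> gfun \<Rightarrow> real" where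
  "energy d N Hx D R K J a b u v =
     1/2 * vformP d N Hx J (\<lambda>p. sqrt (a p) * v p) (\<lambda>p. sqrt (a p) * v p)
   + 1/2 * (\<Sum>i<d. vformP d N Hx J (\<lambda>p. sqrt (b p) * Dx d N D K i u p)
                                    (\<lambda>p. sqrt (b p) * Dx d N D K i u p))
   + 1/2 * (\<Sum>k<d. qf (grid d N) u (Rdir d N Hx R k (eta d K J b k)) u)"

definition scheme_rhs :: "nat \<Rightarrow> nat \<Rightarrow> mat1 \<Rightarrow> ((nat \<Rightarrow> real) \<Rightarrow> mat1)
     \<Rightarrow> (nat \<Rightarrow> nat \<Rightarrow> gfun) \<Rightarrow> gfun \<Rightarrow> gfun \<Rightarrow> gfun \<Rightarrow> gfun" where
  "scheme_rhs d N D Dxx K J b u p = (\<Sum>j<d. \<Sum>k<d.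
      mvec (grid d N) (DDjk d N D Dxx j k (\<lambda>q. (\<Sum>i<d. alpha K J i j i k q) * b q)) u p)"

definition sat_neumann :: "nat \<Rightarrow> nat \<Rightarrow> mat1 \<Rightarrow> mat1 \<Rightarrow> mat1 \<Rightarrow> (nat \<Rightarrow> nat \<Rightarrow> gfun) \<Rightarrow> gfun
     \<Rightarrow> gfun \<Rightarrow> (face \<Rightarrow> gfun) \<Rightarrow> gfun \<Rightarrow> gfun" where
  "sat_neumann d N Hx D Dh K J b gam u p =
     - mvec (grid d N) (dinv (kall d Hx))
         (\<lambda>q. \<Sum>f\<in>faces d. fext d N f
               (\<lambda>r. gam f r * (\<Sum>r'\<in>facepts d N f. Hf d Hx f r r' *
                    (b r' * (ftr d N f (Dn d N D Dh K J gam f u) r' - 0)))) q) p"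

end

theory Submission
  imports Defs "HOL-Library.FuncSet"
begin


lemma finite_grid: "finite (grid d N)"
proof -
  have "grid d N \<subseteq> (\<lambda>f i. if i < d then f i else 0) ` (PiE {..<d} (\<lambda>_. {..<N}))"
  proof
    fix p assume p: "p \<in> grid d N"
    show "p \<in> (\<lambda>f i. if i < d then f i else 0) ` (PiE {..<d} (\<lambda>_. {..<N}))"
    proof
      show "p = (\<lambda>i. if i < d then restrict p {..<d} i else 0)"
        using p by (auto simp: grid_def fun_eq_iff)
      show "restrict p {..<d} \<in> PiE {..<d} (\<lambda>_. {..<N})" using p by (auto simp: grid_def)
    qed
  qed
  then show ?thesis by (rule finite_subset) (auto intro: finite_PiE)
qed

lemma grid_upd: "p \<in> grid d N \<Longrightarrow> j < d \<Longrightarrow> m < N \<Longrightarrow> p(j := m) \<in> grid d N"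
  by (auto simp: grid_def)

lemma grid_lt: "p \<in> grid d N \<Longrightarrow> j < d \<Longrightarrow> p j < N"
  by (auto simp: grid_def)

definition G0 :: "nat \<Rightarrow> nat \<Rightarrow> nat \<Rightarrow> gpt set" where
  "G0 d N j = {p \<in> grid d N. p j = 0}"

lemma finite_G0: "finite (G0 d N j)"
  using finite_grid[of d N] by (auto simp: G0_def)

lemma sum_line:
  assumes "j < d" "0 < N"
  shows "(\<Sum>p\<in>grid d N. F p) = (\<Sum>p\<in>G0 d N j. \<Sum>m<N. F (p(j := m)))"
proof -
  have "(\<Sum>p\<in>G0 d N j. \<Sum>m<N. F (p(j := m))) = (\<Sum>pm\<in>G0 d N j \<times> {..<N}. F ((fst pm)(j := snd pm)))"
    by (simp add: sum.cartesian_product split_def)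
  also have "\<dots> = (\<Sum>p\<in>grid d N. F p)"
    by (rule sum.reindex_bij_witness[where i = "\<lambda>p. (p(j:=0), p j)" and j = "\<lambda>pm. (fst pm)(j := snd pm)"])
       (use assms in \<open>auto simp: G0_def grid_def\<close>)
  finally show ?thesis by simp
qed

lemma sum_face:
  assumes "j < d" "e < N"
  shows "(\<Sum>p\<in>G0 d N j. F (p(j := e))) = (\<Sum>q\<in>{q\<in>grid d N. q j = e}. F q)"
  by (rule sum.reindex_bij_witness[where i = "\<lambda>q. q(j:=0)" and j = "\<lambda>p. p(j := e)"])
     (use assms in \<open>auto simp: G0_def grid_def\<close>)

lemma sum_line_at:
  assumes "p \<in> grid d N" "j < d"
  shows "(\<Sum>q\<in>grid d N. if (\<forall>l. l \<noteq> j \<longrightarrow> p l = q l) then F q else 0) = (\<Sum>m<N. F (p(j := m)))"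
proof -
  let ?L = "(\<lambda>m. p(j := m)) ` {..<N}"
  have sub: "?L \<subseteq> grid d N" using assms by (auto simp: grid_def)
  have "(\<Sum>q\<in>grid d N. if (\<forall>l. l \<noteq> j \<longrightarrow> p l = q l) then F q else 0)
      = (\<Sum>q\<in>?L. if (\<forall>l. l \<noteq> j \<longrightarrow> p l = q l) then F q else 0)"
  proof (rule sum.mono_neutral_right[OF finite_grid sub], rule ballI)
    fix q assume q: "q \<in> grid d N - ?L"
    show "(if (\<forall>l. l \<noteq> j \<longrightarrow> p l = q l) then F q else 0) = 0"
    proof (cases "\<forall>l. l \<noteq> j \<longrightarrow> p l = q l")
      case True
      then have "q = p(j := q j)" by (auto simp: fun_eq_iff)
      moreover have "q j < N" using q assms by (auto simp: grid_def)
      ultimately have "q \<in> ?L" by blast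
      then show ?thesis using q by blast
    qed auto
  qed
  also have "\<dots> = (\<Sum>m<N. F (p(j := m)))"
    by (subst sum.reindex) (auto simp: inj_on_def fun_eq_iff dest: fun_cong[where x = j])
  finally show ?thesis .
qed

lemma dsum1: "a < (N::nat) \<Longrightarrow> b < N \<Longrightarrow> (\<Sum>k<N. \<Sum>l<N. x k * z l * (if k = a \<and> l = b then v else 0)) = x a * z b * (v::real)"
proof -
  assume ab: "a < N" "b < N"
  have "(\<Sum>l<N. x k * z l * (if k = a \<and> l = b then v else 0)) = (\<Sum>l<N. if l = b then (if k = a then x a * z b * v else 0) else 0)" for k
    by (rule sum.cong) auto
  then have "(\<Sum>l<N. x k * z l * (if k = a \<and> l = b then v else 0)) = (if k = a then x a * z b * v else 0)" for k
    using ab by simp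
  then show ?thesis using ab by simp
qed

lemma dsum2: "a < (N::nat) \<Longrightarrow> (\<Sum>k<N. \<Sum>l<N. x k * z l * (if k = a then g l else 0)) = x a * (\<Sum>l<N. z l * (g l::real))"
proof -
  assume ab: "a < N"
  have "(\<Sum>l<N. x k * z l * (if k = a then g l else 0)) = (if k = a then x a * (\<Sum>l<N. z l * g l) else 0)" for k
    by (cases "k = a") (simp_all add: sum_distrib_left mult_ac)
  then show ?thesis using ab by simp
qed

locale sbp =
  fixes d N :: nat and Hx D Dh :: mat1 and Dxx R :: "(nat \<Rightarrow> real) \<Rightarrow> mat1"
  assumes dpos: "1 \<le> d" and N2: "2 \<le> N"
  and Hdiag: "\<And>k l. k < N \<Longrightarrow> l < N \<Longrightarrow> k \<noteq> l \<Longrightarrow> Hx k l = 0"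
  and Hpos: "\<And>k. k < N \<Longrightarrow> 0 < Hx k k"
  and first: "sbp_first N Hx D" and second: "sbp_second N Hx D Dh Dxx R" and psd: "rem_psd N R"
begin

lemma sumH1: "k < N \<Longrightarrow> (\<Sum>m<N. Hx k m * f m) = Hx k k * f k"
proof -
  assume k: "k < N"
  have "(\<Sum>m<N. Hx k m * f m) = (\<Sum>m<N. if m = k then Hx k k * f k else 0)"
    by (rule sum.cong) (use k Hdiag[of k] in auto)
  then show ?thesis using k by simp
qed

lemma sumH2: "l < N \<Longrightarrow> (\<Sum>m<N. f m * Hx m l) = f l * Hx l l"
proof -
  assume l: "l < N"
  have "(\<Sum>m<N. f m * Hx m l) = (\<Sum>m<N. if m = l then f l * Hx l l else 0)"
    by (rule sum.cong) (use l Hdiag[of _ l] in auto)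
  then show ?thesis using l by simp
qed

lemma S1:
  "(\<Sum>k<N. Hx k k * x k * (\<Sum>l<N. D k l * z l))
     = - (\<Sum>l<N. Hx l l * (\<Sum>k<N. D l k * x k) * z l) + x (N-1) * z (N-1) - x 0 * z 0"
proof -
  have key: "Hx k k * D k l = (if k = 0 \<and> l = 0 then -1 else 0) + (if k = N-1 \<and> l = N-1 then 1 else 0) - D l k * Hx l l"
    if "k < N" "l < N" for k l
    using first[unfolded sbp_first_def, rule_format, OF that] sumH1[OF that(1), of "\<lambda>m. D m l"] sumH2[OF that(2), of "\<lambda>m. D m k"] by simp
  have N0: "0 < N" "N - 1 < N" using N2 by auto
  have "(\<Sum>k<N. Hx k k * x k * (\<Sum>l<N. D k l * z l)) = (\<Sum>k<N. \<Sum>l<N. x k * z l * (Hx k k * D k l))"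
    (is "?L = _") by (simp add: sum_distrib_left mult_ac)
  also have "\<dots> = (\<Sum>k<N. \<Sum>l<N. x k * z l * ((if k = 0 \<and> l = 0 then -1 else 0) + (if k = N-1 \<and> l = N-1 then 1 else 0) - D l k * Hx l l))"
    by (intro sum.cong refl) (simp add: key)
  also have "\<dots> = (\<Sum>k<N. \<Sum>l<N. x k * z l * (if k = 0 \<and> l = 0 then -1 else 0))
       + (\<Sum>k<N. \<Sum>l<N. x k * z l * (if k = N-1 \<and> l = N-1 then 1 else 0))
       - (\<Sum>k<N. \<Sum>l<N. x k * z l * (D l k * Hx l l))"
  proof -
    have e: "x k * z l * (A + B - C) = x k * z l * A + x k * z l * B - x k * z l * C" for k l and A B C :: real
      by (simp add: algebra_simps)
    show ?thesis by (simp only: e sum.distrib sum_subtractf)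
  qed
  finally have E0: "?L = (\<Sum>k<N. \<Sum>l<N. x k * z l * (if k = 0 \<and> l = 0 then -1 else 0))
       + (\<Sum>k<N. \<Sum>l<N. x k * z l * (if k = N-1 \<and> l = N-1 then 1 else 0))
       - (\<Sum>k<N. \<Sum>l<N. x k * z l * (D l k * Hx l l))" .
  have P1: "(\<Sum>k<N. \<Sum>l<N. x k * z l * (if k = 0 \<and> l = 0 then -1 else 0)) = - (x 0 * z 0)"
    using dsum1[OF N0(1) N0(1)] by simp
  have P2: "(\<Sum>k<N. \<Sum>l<N. x k * z l * (if k = N-1 \<and> l = N-1 then 1 else 0)) = x (N-1) * z (N-1)"
    using dsum1[OF N0(2) N0(2)] by simp
  have P3: "(\<Sum>k<N. \<Sum>l<N. x k * z l * (D l k * Hx l l)) = (\<Sum>l<N. Hx l l * (\<Sum>k<N. D l k * x k) * z l)"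
    by (subst sum.swap) (simp add: sum_distrib_left sum_distrib_right mult_ac)
  show ?thesis using E0 P1 P2 P3 by linarith
qed

lemma S2:
  "(\<Sum>k<N. Hx k k * x k * (\<Sum>l<N. Dxx c k l * z l))
     = - (\<Sum>m<N. Hx m m * c m * (\<Sum>k<N. D m k * x k) * (\<Sum>l<N. D m l * z l))
       - (\<Sum>k<N. \<Sum>l<N. x k * R c k l * z l)
       - x 0 * c 0 * (\<Sum>l<N. Dh 0 l * z l) + x (N-1) * c (N-1) * (\<Sum>l<N. Dh (N-1) l * z l)"
proof -
  have N0: "0 < N" "N - 1 < N" using N2 by auto
  have key: "Hx k k * Dxx c k l = - (\<Sum>m<N. D m k * Hx m m * c m * D m l) - R c k l
       - (if k = 0 then c 0 * Dh 0 l else 0) + (if k = N-1 then c (N-1) * Dh (N-1) l else 0)"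
    if "k < N" "l < N" for k l
  proof -
    have "(\<Sum>m<N. \<Sum>n<N. D m k * Hx m n * c n * D n l) = (\<Sum>m<N. D m k * Hx m m * c m * D m l)"
    proof (rule sum.cong[OF refl])
      fix m assume "m \<in> {..<N}"
      then have "m < N" by simp
      have "(\<Sum>n<N. D m k * Hx m n * c n * D n l) = D m k * (\<Sum>n<N. Hx m n * (c n * D n l))"
        by (simp add: sum_distrib_left mult.assoc)
      then show "(\<Sum>n<N. D m k * Hx m n * c n * D n l) = D m k * Hx m m * c m * D m l"
        using sumH1[OF \<open>m < N\<close>, of "\<lambda>n. c n * D n l"] by simp
    qed
    then show ?thesis
      using second[unfolded sbp_second_def, rule_format, OF that, of c] sumH1[OF that(1), of "\<lambda>m. Dxx c m l"] by simp
  qed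
  have "(\<Sum>k<N. Hx k k * x k * (\<Sum>l<N. Dxx c k l * z l)) = (\<Sum>k<N. \<Sum>l<N. x k * z l * (Hx k k * Dxx c k l))"
    (is "?L = _")
    by (simp add: sum_distrib_left mult_ac)
  also have "\<dots> = (\<Sum>k<N. \<Sum>l<N. x k * z l * (- (\<Sum>m<N. D m k * Hx m m * c m * D m l) - R c k l
       - (if k = 0 then c 0 * Dh 0 l else 0) + (if k = N-1 then c (N-1) * Dh (N-1) l else 0)))"
    by (intro sum.cong refl) (simp add: key)
  also have "\<dots> = - (\<Sum>k<N. \<Sum>l<N. x k * z l * (\<Sum>m<N. D m k * Hx m m * c m * D m l))
       - (\<Sum>k<N. \<Sum>l<N. x k * R c k l * z l)
       - (\<Sum>k<N. \<Sum>l<N. x k * z l * (if k = 0 then c 0 * Dh 0 l else 0))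
       + (\<Sum>k<N. \<Sum>l<N. x k * z l * (if k = N-1 then c (N-1) * Dh (N-1) l else 0))"
  proof -
    have e: "x k * z l * (- A - B - C + E) = - (x k * z l * A) - x k * B * z l - x k * z l * C + x k * z l * E" for k l and A B C E :: real
      by (simp add: algebra_simps)
    show ?thesis by (simp only: e sum.distrib sum_subtractf sum_negf)
  qed
  finally have E0: "?L = - (\<Sum>k<N. \<Sum>l<N. x k * z l * (\<Sum>m<N. D m k * Hx m m * c m * D m l))
       - (\<Sum>k<N. \<Sum>l<N. x k * R c k l * z l)
       - (\<Sum>k<N. \<Sum>l<N. x k * z l * (if k = 0 then c 0 * Dh 0 l else 0))
       + (\<Sum>k<N. \<Sum>l<N. x k * z l * (if k = N-1 then c (N-1) * Dh (N-1) l else 0))" .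
  have P1: "(\<Sum>k<N. \<Sum>l<N. x k * z l * (if k = 0 then c 0 * Dh 0 l else 0)) = x 0 * c 0 * (\<Sum>l<N. Dh 0 l * z l)"
    using dsum2[OF N0(1), of x z "\<lambda>l. c 0 * Dh 0 l"] by (simp add: sum_distrib_left mult_ac)
  have P2: "(\<Sum>k<N. \<Sum>l<N. x k * z l * (if k = N-1 then c (N-1) * Dh (N-1) l else 0)) = x (N-1) * c (N-1) * (\<Sum>l<N. Dh (N-1) l * z l)"
    using dsum2[OF N0(2), of x z "\<lambda>l. c (N-1) * Dh (N-1) l"] by (simp add: sum_distrib_left mult_ac)
  have P3: "(\<Sum>k<N. \<Sum>l<N. x k * z l * (\<Sum>m<N. D m k * Hx m m * c m * D m l))
      = (\<Sum>m<N. Hx m m * c m * (\<Sum>k<N. D m k * x k) * (\<Sum>l<N. D m l * z l))"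
  proof -
    have "(\<Sum>k<N. \<Sum>l<N. x k * z l * (\<Sum>m<N. D m k * Hx m m * c m * D m l))
        = (\<Sum>k<N. \<Sum>m<N. \<Sum>l<N. x k * z l * (D m k * Hx m m * c m * D m l))"
    proof (rule sum.cong[OF refl])
      fix k assume "k \<in> {..<N}"
      have "(\<Sum>l<N. x k * z l * (\<Sum>m<N. D m k * Hx m m * c m * D m l))
          = (\<Sum>l<N. \<Sum>m<N. x k * z l * (D m k * Hx m m * c m * D m l))"
        by (simp add: sum_distrib_left)
      also have "\<dots> = (\<Sum>m<N. \<Sum>l<N. x k * z l * (D m k * Hx m m * c m * D m l))"
        by (rule sum.swap)
      finally show "(\<Sum>l<N. x k * z l * (\<Sum>m<N. D m k * Hx m m * c m * D m l))
          = (\<Sum>m<N. \<Sum>l<N. x k * z l * (D m k * Hx m m * c m * D m l))" .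
    qed
    also have "\<dots> = (\<Sum>m<N. \<Sum>k<N. \<Sum>l<N. x k * z l * (D m k * Hx m m * c m * D m l))"
      by (rule sum.swap)
    also have "\<dots> = (\<Sum>m<N. Hx m m * c m * (\<Sum>k<N. D m k * x k) * (\<Sum>l<N. D m l * z l))"
    proof (rule sum.cong[OF refl])
      fix m
      have "(\<Sum>k<N. \<Sum>l<N. x k * z l * (D m k * Hx m m * c m * D m l))
          = (\<Sum>k<N. \<Sum>l<N. Hx m m * c m * ((D m k * x k) * (D m l * z l)))"
        by (intro sum.cong refl) (simp only: mult_ac)
      also have "\<dots> = Hx m m * c m * (\<Sum>k<N. \<Sum>l<N. (D m k * x k) * (D m l * z l))"
        by (simp only: sum_distrib_left)
      also have "\<dots> = Hx m m * c m * (\<Sum>k<N. D m k * x k) * (\<Sum>l<N. D m l * z l)"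
        by (simp only: sum_product mult.assoc)
      finally show "(\<Sum>k<N. \<Sum>l<N. x k * z l * (D m k * Hx m m * c m * D m l))
          = Hx m m * c m * (\<Sum>k<N. D m k * x k) * (\<Sum>l<N. D m l * z l)" .
    qed
    finally show ?thesis .
  qed
  show ?thesis unfolding E0 P1 P2 P3 by (rule refl)
qed

end




definition Dl :: "nat \<Rightarrow> nat \<Rightarrow> mat1 \<Rightarrow> gfun \<Rightarrow> gfun" where
  "Dl N j X y p = (\<Sum>m<N. X (p j) m * y (p(j := m)))"

definition Hoth :: "nat \<Rightarrow> mat1 \<Rightarrow> nat \<Rightarrow> gpt \<Rightarrow> real" where
  "Hoth d Hx j p = (\<Prod>l\<in>{..<d} - {j}. Hx (p l) (p l))"

definition Hd :: "nat \<Rightarrow> mat1 \<Rightarrow> gpt \<Rightarrow> real" where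
  "Hd d Hx p = (\<Prod>l<d. Hx (p l) (p l))"

lemma Dl_upd: "Dl N j X y (p(j := m)) = (\<Sum>l<N. X m l * y (p(j := l)))"
  by (simp add: Dl_def)

lemma gline_upd: "gline N j c (p(j := m)) = gline N j c p"
  by (simp add: gline_def fun_eq_iff)

lemma gline_at: "m < N \<Longrightarrow> gline N j c p m = c (p(j := m))"
  by (simp add: gline_def)

lemma Hoth_upd: "Hoth d Hx j (p(j := m)) = Hoth d Hx j p"
  unfolding Hoth_def by (rule prod.cong) auto

lemma Hd_upd: "j < d \<Longrightarrow> Hd d Hx (p(j := m)) = Hx m m * Hoth d Hx j p"
proof -
  assume j: "j < d"
  have "Hd d Hx (p(j := m)) = Hx m m * (\<Prod>l\<in>{..<d} - {j}. Hx ((p(j := m)) l) ((p(j := m)) l))"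
    unfolding Hd_def using j by (subst prod.remove[of _ j]) auto
  also have "(\<Prod>l\<in>{..<d} - {j}. Hx ((p(j := m)) l) ((p(j := m)) l)) = Hoth d Hx j p"
    unfolding Hoth_def by (rule prod.cong) auto
  finally show ?thesis .
qed

lemma Hd_split: "j < d \<Longrightarrow> Hd d Hx p = Hx (p j) (p j) * Hoth d Hx j p"
  using Hd_upd[of j d Hx p "p j"] by simp

lemma mmul_dg_mvec:
  assumes "finite G"
  shows "mvec G (mmul G (mmul G A (dg c)) B) y p = mvec G A (\<lambda>q. c q * mvec G B y q) p"
proof -
  have m1: "mmul G A (dg c) p r = A p r * c r" if "r \<in> G" for p r
  proof -
    have "mmul G A (dg c) p r = (\<Sum>s\<in>G. if s = r then A p r * c r else 0)"
      unfolding mmul_def dg_def by (rule sum.cong) auto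
    then show ?thesis using assms that by simp
  qed
  have "mvec G (mmul G (mmul G A (dg c)) B) y p = (\<Sum>q\<in>G. (\<Sum>r\<in>G. A p r * c r * B r q) * y q)"
    unfolding mvec_def mmul_def by (intro sum.cong refl) (simp add: m1[unfolded mmul_def])
  also have "\<dots> = (\<Sum>q\<in>G. \<Sum>r\<in>G. A p r * c r * B r q * y q)"
    by (simp add: sum_distrib_right)
  also have "\<dots> = (\<Sum>r\<in>G. \<Sum>q\<in>G. A p r * c r * B r q * y q)"
    by (rule sum.swap)
  also have "\<dots> = mvec G A (\<lambda>q. c q * mvec G B y q) p"
    unfolding mvec_def by (simp add: sum_distrib_left mult_ac)
  finally show ?thesis .
qed

context sbp
begin

abbreviation "G \<equiv> grid d N"

definition Bd :: "nat \<Rightarrow> gfun \<Rightarrow> real" where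
  "Bd j F = (\<Sum>p\<in>G0 d N j. Hoth d Hx j p * (F (p(j := N - 1)) - F (p(j := 0))))"

lemma N0: "0 < N" using N2 by simp

lemma Hx_pos_grid: "p \<in> G \<Longrightarrow> l < d \<Longrightarrow> 0 < Hx (p l) (p l)"
  by (rule Hpos) (simp add: grid_def)

lemma Hoth_pos: "p \<in> G \<Longrightarrow> 0 < Hoth d Hx j p"
  unfolding Hoth_def by (rule prod_pos) (use Hx_pos_grid in auto)

lemma Hd_pos: "p \<in> G \<Longrightarrow> 0 < Hd d Hx p"
  unfolding Hd_def by (rule prod_pos) (use Hx_pos_grid in auto)

lemma mvec_kdir: "p \<in> G \<Longrightarrow> j < d \<Longrightarrow> mvec G (kdir j X) y p = Dl N j X y p"
proof -
  assume p: "p \<in> G" and j: "j < d"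
  have "mvec G (kdir j X) y p = (\<Sum>q\<in>G. if (\<forall>l. l \<noteq> j \<longrightarrow> p l = q l) then X (p j) (q j) * y q else 0)"
    unfolding mvec_def by (rule sum.cong) (auto simp: kdir_def)
  also have "\<dots> = Dl N j X y p" using sum_line_at[OF p j, of "\<lambda>q. X (p j) (q j) * y q"] by (simp add: Dl_def)
  finally show ?thesis .
qed

lemma mvec_dline: "p \<in> G \<Longrightarrow> j < d \<Longrightarrow>
   mvec G (dline N j Op c) y p = (\<Sum>m<N. Op (gline N j c p) (p j) m * y (p(j := m)))"
proof -
  assume p: "p \<in> G" and j: "j < d"
  have "mvec G (dline N j Op c) y p = (\<Sum>q\<in>G. if (\<forall>l. l \<noteq> j \<longrightarrow> p l = q l) then Op (gline N j c p) (p j) (q j) * y q else 0)"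
    unfolding mvec_def by (rule sum.cong) (auto simp: dline_def)
  also have "\<dots> = (\<Sum>m<N. Op (gline N j c p) (p j) m * y (p(j := m)))" using sum_line_at[OF p j, of "\<lambda>q. Op (gline N j c p) (p j) (q j) * y q"] by simp
  finally show ?thesis .
qed

lemma kall_diag: "p \<in> G \<Longrightarrow> q \<in> G \<Longrightarrow> kall d Hx p q = (if p = q then Hd d Hx p else 0)"
proof -
  assume p: "p \<in> G" and q: "q \<in> G"
  show ?thesis
  proof (cases "p = q")
    case True then show ?thesis by (simp add: kall_def Hd_def)
  next
    case False
    then obtain l where l: "p l \<noteq> q l" by (auto simp: fun_eq_iff)
    have "l < d"
    proof (rule ccontr)
      assume "\<not> l < d"
      then show False using l p q by (auto simp: grid_def)
    qed
    then have "Hx (p l) (q l) = 0" using Hdiag[of "p l" "q l"] l p q by (auto simp: grid_def)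
    then have "kall d Hx p q = 0" unfolding kall_def using \<open>l < d\<close>
      by (subst prod.remove[of _ l]) auto
    then show ?thesis using False by simp
  qed
qed

end




context sbp
begin

lemma GS1:
  assumes j: "j < d"
  shows "(\<Sum>p\<in>G. Hd d Hx p * x p * Dl N j D z p)
       = - (\<Sum>p\<in>G. Hd d Hx p * Dl N j D x p * z p) + Bd j (\<lambda>p. x p * z p)"
proof -
  have line: "(\<Sum>m<N. Hd d Hx (p(j:=m)) * x (p(j:=m)) * Dl N j D z (p(j:=m)))
     = - (\<Sum>m<N. Hd d Hx (p(j:=m)) * Dl N j D x (p(j:=m)) * z (p(j:=m)))
       + Hoth d Hx j p * (x (p(j:=N-1)) * z (p(j:=N-1)) - x (p(j:=0)) * z (p(j:=0)))" for p
  proof -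
    have a: "(\<Sum>m<N. Hd d Hx (p(j:=m)) * x (p(j:=m)) * Dl N j D z (p(j:=m)))
       = Hoth d Hx j p * (\<Sum>k<N. Hx k k * x (p(j:=k)) * (\<Sum>l<N. D k l * z (p(j:=l))))"
      by (simp add: Hd_upd[OF j] Dl_upd sum_distrib_left mult_ac)
    have b: "(\<Sum>m<N. Hd d Hx (p(j:=m)) * Dl N j D x (p(j:=m)) * z (p(j:=m)))
       = Hoth d Hx j p * (\<Sum>l<N. Hx l l * (\<Sum>k<N. D l k * x (p(j:=k))) * z (p(j:=l)))"
      by (simp add: Hd_upd[OF j] Dl_upd sum_distrib_left mult_ac)
    show ?thesis unfolding a b S1[of "\<lambda>k. x (p(j:=k))" "\<lambda>l. z (p(j:=l))"] by (simp add: algebra_simps)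
  qed
  have "(\<Sum>p\<in>G. Hd d Hx p * x p * Dl N j D z p)
      = (\<Sum>p\<in>G0 d N j. \<Sum>m<N. Hd d Hx (p(j:=m)) * x (p(j:=m)) * Dl N j D z (p(j:=m)))"
    by (rule sum_line[OF j N0])
  also have "\<dots> = (\<Sum>p\<in>G0 d N j. - (\<Sum>m<N. Hd d Hx (p(j:=m)) * Dl N j D x (p(j:=m)) * z (p(j:=m)))
       + Hoth d Hx j p * (x (p(j:=N-1)) * z (p(j:=N-1)) - x (p(j:=0)) * z (p(j:=0))))"
    by (rule sum.cong[OF refl]) (rule line)
  also have "\<dots> = - (\<Sum>p\<in>G0 d N j. \<Sum>m<N. Hd d Hx (p(j:=m)) * Dl N j D x (p(j:=m)) * z (p(j:=m)))
       + Bd j (\<lambda>p. x p * z p)"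
    by (simp add: Bd_def sum.distrib sum_negf sum_subtractf)
  also have "(\<Sum>p\<in>G0 d N j. \<Sum>m<N. Hd d Hx (p(j:=m)) * Dl N j D x (p(j:=m)) * z (p(j:=m)))
      = (\<Sum>p\<in>G. Hd d Hx p * Dl N j D x p * z p)"
    by (rule sum_line[OF j N0, symmetric])
  finally show ?thesis .
qed

lemma GS2:
  assumes j: "j < d"
  shows "(\<Sum>p\<in>G. Hd d Hx p * x p * mvec G (dline N j Dxx c) y p)
       = - (\<Sum>p\<in>G. Hd d Hx p * c p * Dl N j D x p * Dl N j D y p)
         - (\<Sum>p\<in>G0 d N j. Hoth d Hx j p * (\<Sum>k<N. \<Sum>l<N. x (p(j:=k)) * R (gline N j c p) k l * y (p(j:=l))))
         + Bd j (\<lambda>p. x p * c p * Dl N j Dh y p)"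
proof -
  have line: "(\<Sum>m<N. Hd d Hx (p(j:=m)) * x (p(j:=m)) * mvec G (dline N j Dxx c) y (p(j:=m)))
     = - (\<Sum>m<N. Hd d Hx (p(j:=m)) * c (p(j:=m)) * Dl N j D x (p(j:=m)) * Dl N j D y (p(j:=m)))
       - Hoth d Hx j p * (\<Sum>k<N. \<Sum>l<N. x (p(j:=k)) * R (gline N j c p) k l * y (p(j:=l)))
       + Hoth d Hx j p * (x (p(j:=N-1)) * c (p(j:=N-1)) * Dl N j Dh y (p(j:=N-1))
                          - x (p(j:=0)) * c (p(j:=0)) * Dl N j Dh y (p(j:=0)))" if p: "p \<in> G0 d N j" for p
  proof -
    have pG: "p \<in> G" using p by (simp add: G0_def)
    have a: "(\<Sum>m<N. Hd d Hx (p(j:=m)) * x (p(j:=m)) * mvec G (dline N j Dxx c) y (p(j:=m)))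
       = Hoth d Hx j p * (\<Sum>k<N. Hx k k * x (p(j:=k)) * (\<Sum>l<N. Dxx (gline N j c p) k l * y (p(j:=l))))"
    proof -
      have "(\<Sum>m<N. Hd d Hx (p(j:=m)) * x (p(j:=m)) * mvec G (dline N j Dxx c) y (p(j:=m)))
         = (\<Sum>k<N. Hoth d Hx j p * (Hx k k * x (p(j:=k)) * (\<Sum>l<N. Dxx (gline N j c p) k l * y (p(j:=l)))))"
        by (rule sum.cong[OF refl]) (simp add: mvec_dline[OF grid_upd[OF pG j] j] gline_upd Hd_upd[OF j] mult_ac)
      then show ?thesis by (simp add: sum_distrib_left)
    qed
    have b: "(\<Sum>m<N. Hd d Hx (p(j:=m)) * c (p(j:=m)) * Dl N j D x (p(j:=m)) * Dl N j D y (p(j:=m)))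
       = Hoth d Hx j p * (\<Sum>m<N. Hx m m * gline N j c p m * (\<Sum>k<N. D m k * x (p(j:=k))) * (\<Sum>l<N. D m l * y (p(j:=l))))"
    proof -
      have "(\<Sum>m<N. Hd d Hx (p(j:=m)) * c (p(j:=m)) * Dl N j D x (p(j:=m)) * Dl N j D y (p(j:=m)))
         = (\<Sum>m<N. Hoth d Hx j p * (Hx m m * gline N j c p m * (\<Sum>k<N. D m k * x (p(j:=k))) * (\<Sum>l<N. D m l * y (p(j:=l)))))"
        by (rule sum.cong[OF refl]) (simp add: gline_at Dl_upd Hd_upd[OF j] mult_ac)
      then show ?thesis by (simp add: sum_distrib_left)
    qed
    have c0: "gline N j c p 0 = c (p(j:=0))" "gline N j c p (N-1) = c (p(j:=N-1))"
      using N2 by (simp_all add: gline_at)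
    show ?thesis unfolding a b S2[of "\<lambda>k. x (p(j:=k))" "gline N j c p" "\<lambda>l. y (p(j:=l))"] c0
      unfolding Dl_upd by (simp add: algebra_simps)
  qed
  have "(\<Sum>p\<in>G. Hd d Hx p * x p * mvec G (dline N j Dxx c) y p)
      = (\<Sum>p\<in>G0 d N j. \<Sum>m<N. Hd d Hx (p(j:=m)) * x (p(j:=m)) * mvec G (dline N j Dxx c) y (p(j:=m)))"
    by (rule sum_line[OF j N0])
  also have "\<dots> = (\<Sum>p\<in>G0 d N j. - (\<Sum>m<N. Hd d Hx (p(j:=m)) * c (p(j:=m)) * Dl N j D x (p(j:=m)) * Dl N j D y (p(j:=m)))
       - Hoth d Hx j p * (\<Sum>k<N. \<Sum>l<N. x (p(j:=k)) * R (gline N j c p) k l * y (p(j:=l)))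
       + Hoth d Hx j p * (x (p(j:=N-1)) * c (p(j:=N-1)) * Dl N j Dh y (p(j:=N-1))
                          - x (p(j:=0)) * c (p(j:=0)) * Dl N j Dh y (p(j:=0))))"
    by (rule sum.cong[OF refl]) (rule line)
  also have "\<dots> = - (\<Sum>p\<in>G0 d N j. \<Sum>m<N. Hd d Hx (p(j:=m)) * c (p(j:=m)) * Dl N j D x (p(j:=m)) * Dl N j D y (p(j:=m)))
         - (\<Sum>p\<in>G0 d N j. Hoth d Hx j p * (\<Sum>k<N. \<Sum>l<N. x (p(j:=k)) * R (gline N j c p) k l * y (p(j:=l))))
         + Bd j (\<lambda>p. x p * c p * Dl N j Dh y p)"
    by (simp add: Bd_def sum.distrib sum_negf sum_subtractf)
  also have "(\<Sum>p\<in>G0 d N j. \<Sum>m<N. Hd d Hx (p(j:=m)) * c (p(j:=m)) * Dl N j D x (p(j:=m)) * Dl N j D y (p(j:=m)))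
      = (\<Sum>p\<in>G. Hd d Hx p * c p * Dl N j D x p * Dl N j D y p)"
    by (rule sum_line[OF j N0, symmetric])
  finally show ?thesis .
qed

lemma Rdir_eq:
  assumes p: "p \<in> G" and q: "q \<in> G" and j: "j < d"
  shows "Rdir d N Hx R j c p q = (if \<forall>l. l \<noteq> j \<longrightarrow> p l = q l then Hoth d Hx j p * R (gline N j c p) (p j) (q j) else 0)"
proof -
  have pj: "0 < Hx (p j) (p j)" using Hx_pos_grid[OF p j] .
  have inner: "mmul G (dinv (kdir j Hx)) (kall d Hx) p r = kall d Hx p r / Hx (p j) (p j)" for r
  proof -
    have "mmul G (dinv (kdir j Hx)) (kall d Hx) p r = (\<Sum>s\<in>G. if s = p then kall d Hx p r / Hx (p j) (p j) else 0)"
      unfolding mmul_def by (rule sum.cong) (auto simp: dinv_def kdir_def)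
    then show ?thesis using p finite_grid by simp
  qed
  have "Rdir d N Hx R j c p q = (\<Sum>r\<in>G. if r = p then Hd d Hx p / Hx (p j) (p j) * dline N j R c p q else 0)"
    unfolding Rdir_def mmul_def[of G _ "dline N j R c"] inner
    by (rule sum.cong) (auto simp: kall_diag[OF p])
  also have "\<dots> = Hd d Hx p / Hx (p j) (p j) * dline N j R c p q" using p finite_grid by simp
  also have "Hd d Hx p / Hx (p j) (p j) = Hoth d Hx j p" using Hd_split[OF j] pj by simp
  finally show ?thesis by (auto simp: dline_def)
qed

lemma QR:
  assumes j: "j < d"
  shows "qf G x (Rdir d N Hx R j c) y
     = (\<Sum>p\<in>G0 d N j. Hoth d Hx j p * (\<Sum>k<N. \<Sum>l<N. x (p(j:=k)) * R (gline N j c p) k l * y (p(j:=l))))"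
proof -
  have row: "(\<Sum>q\<in>G. x p * Rdir d N Hx R j c p q * y q)
      = (\<Sum>m<N. x p * (Hoth d Hx j p * R (gline N j c p) (p j) m) * y (p(j:=m)))" if p: "p \<in> G" for p
  proof -
    have "(\<Sum>q\<in>G. x p * Rdir d N Hx R j c p q * y q)
       = (\<Sum>q\<in>G. if \<forall>l. l \<noteq> j \<longrightarrow> p l = q l then x p * (Hoth d Hx j p * R (gline N j c p) (p j) (q j)) * y q else 0)"
      by (rule sum.cong[OF refl]) (auto simp: Rdir_eq[OF p _ j])
    also have "\<dots> = (\<Sum>m<N. x p * (Hoth d Hx j p * R (gline N j c p) (p j) m) * y (p(j:=m)))"
      using sum_line_at[OF p j, of "\<lambda>q. x p * (Hoth d Hx j p * R (gline N j c p) (p j) (q j)) * y q"] by simp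
    finally show ?thesis .
  qed
  have "qf G x (Rdir d N Hx R j c) y = (\<Sum>p\<in>G. \<Sum>m<N. x p * (Hoth d Hx j p * R (gline N j c p) (p j) m) * y (p(j:=m)))"
    unfolding qf_def by (rule sum.cong[OF refl]) (rule row)
  also have "\<dots> = (\<Sum>p\<in>G0 d N j. \<Sum>k<N. \<Sum>m<N. x (p(j:=k)) * (Hoth d Hx j p * R (gline N j c p) k m) * y (p(j:=m)))"
    by (simp add: sum_line[OF j N0] Hoth_upd gline_upd)
  also have "\<dots> = (\<Sum>p\<in>G0 d N j. Hoth d Hx j p * (\<Sum>k<N. \<Sum>l<N. x (p(j:=k)) * R (gline N j c p) k l * y (p(j:=l))))"
    by (simp add: sum_distrib_left mult_ac)
  finally show ?thesis .
qed

end




lemma triple: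
  "(\<Sum>j<d. \<Sum>k<d. a j * (\<Sum>i<d. P i j * Q i k) * c k) = (\<Sum>i<d. (\<Sum>j<d. P i j * a j) * (\<Sum>k<d. Q i k * c k :: real))"
proof -
  have "(\<Sum>j<d. \<Sum>k<d. a j * (\<Sum>i<d. P i j * Q i k) * c k) = (\<Sum>j<d. \<Sum>k<d. \<Sum>i<d. (P i j * a j) * (Q i k * c k))"
    by (simp add: sum_distrib_left sum_distrib_right mult_ac)
  also have "\<dots> = (\<Sum>j<d. \<Sum>i<d. \<Sum>k<d. (P i j * a j) * (Q i k * c k))"
    by (rule sum.cong[OF refl]) (rule sum.swap)
  also have "\<dots> = (\<Sum>i<d. \<Sum>j<d. \<Sum>k<d. (P i j * a j) * (Q i k * c k))"
    by (rule sum.swap)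
  also have "\<dots> = (\<Sum>i<d. (\<Sum>j<d. P i j * a j) * (\<Sum>k<d. Q i k * c k))"
    by (simp add: sum_product)
  finally show ?thesis .
qed

definition cc :: "nat \<Rightarrow> (nat \<Rightarrow> nat \<Rightarrow> gfun) \<Rightarrow> gfun \<Rightarrow> gfun \<Rightarrow> nat \<Rightarrow> nat \<Rightarrow> gfun" where
  "cc d K J b j k = (\<lambda>q. (\<Sum>i<d. alpha K J i j i k q) * b q)"

context sbp
begin

lemma Bd_sum: "finite S \<Longrightarrow> Bd j (\<lambda>p. \<Sum>k\<in>S. F k p) = (\<Sum>k\<in>S. Bd j (F k))"
proof -
  assume S: "finite S"
  have "Bd j (\<lambda>p. \<Sum>k\<in>S. F k p) = (\<Sum>p\<in>G0 d N j. \<Sum>k\<in>S. Hoth d Hx j p * (F k (p(j := N - 1)) - F k (p(j := 0))))"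
    unfolding Bd_def by (simp add: sum_subtractf[symmetric] sum_distrib_left)
  also have "\<dots> = (\<Sum>k\<in>S. \<Sum>p\<in>G0 d N j. Hoth d Hx j p * (F k (p(j := N - 1)) - F k (p(j := 0))))"
    by (rule sum.swap)
  finally show ?thesis by (simp add: Bd_def)
qed

lemma Bd_sum': "Bd j (\<lambda>p. x p * (\<Sum>k<d. F k p)) = (\<Sum>k<d. Bd j (\<lambda>p. x p * F k p))"
  using Bd_sum[of "{..<d}" j "\<lambda>k p. x p * F k p"] by (simp add: sum_distrib_left)

lemma mvec_kdir2: "p \<in> G \<Longrightarrow> j < d \<Longrightarrow> k < d \<Longrightarrow>
   mvec G (kdir j D) (\<lambda>q. c q * mvec G (kdir k D) y q) p = Dl N j D (\<lambda>q. c q * Dl N k D y q) p"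
  unfolding mvec_kdir Dl_def by (rule sum.cong[OF refl]) (simp add: mvec_kdir grid_upd Dl_def)

lemma rhs_eq:
  assumes p: "p \<in> G"
  shows "scheme_rhs d N D Dxx K J b y p = (\<Sum>j<d. \<Sum>k<d.
     (if j = k then mvec G (dline N j Dxx (cc d K J b j j)) y p
      else Dl N j D (\<lambda>q. cc d K J b j k q * Dl N k D y q) p))"
  unfolding scheme_rhs_def
  by (intro sum.cong refl) (auto simp: DDjk_def mmul_dg_mvec[OF finite_grid] mvec_kdir2[OF p] cc_def[symmetric])

lemma term_jk:
  assumes j: "j < d" and k: "k < d"
  shows "(\<Sum>p\<in>G. Hd d Hx p * x p * (if j = k then mvec G (dline N j Dxx (cc d K J b j j)) y p
      else Dl N j D (\<lambda>q. cc d K J b j k q * Dl N k D y q) p))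
   = - (\<Sum>p\<in>G. Hd d Hx p * Dl N j D x p * cc d K J b j k p * Dl N k D y p)
     - (if j = k then qf G x (Rdir d N Hx R j (cc d K J b j j)) y else 0)
     + Bd j (\<lambda>p. x p * (if j = k then cc d K J b j j p * Dl N j Dh y p else cc d K J b j k p * Dl N k D y p))"
proof (cases "j = k")
  case True
  then show ?thesis using GS2[OF j, of x "cc d K J b j j" y] QR[OF j, of x "cc d K J b j j" y]
    by (simp add: mult_ac)
next
  case False
  then show ?thesis using GS1[OF j, of x "\<lambda>q. cc d K J b j k q * Dl N k D y q"]
    by (simp add: mult_ac)
qed

lemma cc_eta: "cc d K J b j j = eta d K J b j"
  by (simp add: cc_def eta_def fun_eq_iff)

lemma Dx_eq: "p \<in> G \<Longrightarrow> Dx d N D K i x p = (\<Sum>j<d. K i j p * Dl N j D x p)"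
  unfolding Dx_def by (rule sum.cong[OF refl]) (simp add: mvec_kdir)

lemma interior:
  "(\<Sum>j<d. \<Sum>k<d. \<Sum>p\<in>G. Hd d Hx p * Dl N j D x p * cc d K J b j k p * Dl N k D y p)
   = (\<Sum>i<d. \<Sum>p\<in>G. Hd d Hx p * (J p * b p) * Dx d N D K i x p * Dx d N D K i y p)"
proof -
  have pt: "(\<Sum>j<d. \<Sum>k<d. Dl N j D x p * cc d K J b j k p * Dl N k D y p)
     = (\<Sum>i<d. (J p * b p) * Dx d N D K i x p * Dx d N D K i y p)" if p: "p \<in> G" for p
  proof -
    have "(\<Sum>j<d. \<Sum>k<d. Dl N j D x p * cc d K J b j k p * Dl N k D y p)
       = (\<Sum>j<d. \<Sum>k<d. Dl N j D x p * (\<Sum>i<d. K i j p * (J p * K i k p * b p)) * Dl N k D y p)"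
      by (simp add: cc_def alpha_def sum_distrib_right sum_distrib_left mult_ac)
    also have "\<dots> = (\<Sum>i<d. (\<Sum>j<d. K i j p * Dl N j D x p) * (\<Sum>k<d. (J p * K i k p * b p) * Dl N k D y p))"
      by (rule triple)
    also have "\<dots> = (\<Sum>i<d. (J p * b p) * Dx d N D K i x p * Dx d N D K i y p)"
    proof (rule sum.cong[OF refl])
      fix i
      have "(\<Sum>k<d. (J p * K i k p * b p) * Dl N k D y p) = (J p * b p) * (\<Sum>k<d. K i k p * Dl N k D y p)"
        by (simp add: sum_distrib_left mult_ac)
      then show "(\<Sum>j<d. K i j p * Dl N j D x p) * (\<Sum>k<d. (J p * K i k p * b p) * Dl N k D y p)
          = (J p * b p) * Dx d N D K i x p * Dx d N D K i y p"
        by (simp add: Dx_eq[OF p])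
    qed
    finally show ?thesis .
  qed
  have "(\<Sum>j<d. \<Sum>k<d. \<Sum>p\<in>G. Hd d Hx p * Dl N j D x p * cc d K J b j k p * Dl N k D y p)
      = (\<Sum>j<d. \<Sum>p\<in>G. \<Sum>k<d. Hd d Hx p * Dl N j D x p * cc d K J b j k p * Dl N k D y p)"
    by (rule sum.cong[OF refl]) (rule sum.swap)
  also have "\<dots> = (\<Sum>p\<in>G. \<Sum>j<d. \<Sum>k<d. Hd d Hx p * Dl N j D x p * cc d K J b j k p * Dl N k D y p)"
    by (rule sum.swap)
  also have "\<dots> = (\<Sum>p\<in>G. Hd d Hx p * (\<Sum>j<d. \<Sum>k<d. Dl N j D x p * cc d K J b j k p * Dl N k D y p))"
    by (simp add: sum_distrib_left mult_ac)
  also have "\<dots> = (\<Sum>p\<in>G. Hd d Hx p * (\<Sum>i<d. (J p * b p) * Dx d N D K i x p * Dx d N D K i y p))"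
    by (rule sum.cong[OF refl]) (simp add: pt)
  also have "\<dots> = (\<Sum>p\<in>G. \<Sum>i<d. Hd d Hx p * (J p * b p) * Dx d N D K i x p * Dx d N D K i y p)"
    by (simp add: sum_distrib_left mult_ac)
  also have "\<dots> = (\<Sum>i<d. \<Sum>p\<in>G. Hd d Hx p * (J p * b p) * Dx d N D K i x p * Dx d N D K i y p)"
    by (rule sum.swap)
  finally show ?thesis .
qed

definition W :: "(nat \<Rightarrow> nat \<Rightarrow> gfun) \<Rightarrow> gfun \<Rightarrow> gfun \<Rightarrow> gfun \<Rightarrow> nat \<Rightarrow> gfun" where
  "W K J b y j p = (\<Sum>k<d. if j = k then cc d K J b j j p * Dl N j Dh y p else cc d K J b j k p * Dl N k D y p)"

lemma GREEN:
  "(\<Sum>p\<in>G. Hd d Hx p * x p * scheme_rhs d N D Dxx K J b y p)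
   = - (\<Sum>i<d. \<Sum>p\<in>G. Hd d Hx p * (J p * b p) * Dx d N D K i x p * Dx d N D K i y p)
     - (\<Sum>k<d. qf G x (Rdir d N Hx R k (eta d K J b k)) y)
     + (\<Sum>j<d. Bd j (\<lambda>p. x p * W K J b y j p))"
proof -
  let ?T = "\<lambda>j k p. (if j = k then mvec G (dline N j Dxx (cc d K J b j j)) y p
      else Dl N j D (\<lambda>q. cc d K J b j k q * Dl N k D y q) p)"
  have "(\<Sum>p\<in>G. Hd d Hx p * x p * scheme_rhs d N D Dxx K J b y p)
      = (\<Sum>p\<in>G. \<Sum>j<d. \<Sum>k<d. Hd d Hx p * x p * ?T j k p)"
    by (rule sum.cong[OF refl]) (simp add: rhs_eq sum_distrib_left)
  also have "\<dots> = (\<Sum>j<d. \<Sum>p\<in>G. \<Sum>k<d. Hd d Hx p * x p * ?T j k p)"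
    by (rule sum.swap)
  also have "\<dots> = (\<Sum>j<d. \<Sum>k<d. \<Sum>p\<in>G. Hd d Hx p * x p * ?T j k p)"
    by (rule sum.cong[OF refl]) (rule sum.swap)
  also have "\<dots> = (\<Sum>j<d. \<Sum>k<d.
       - (\<Sum>p\<in>G. Hd d Hx p * Dl N j D x p * cc d K J b j k p * Dl N k D y p)
       - (if j = k then qf G x (Rdir d N Hx R j (cc d K J b j j)) y else 0)
       + Bd j (\<lambda>p. x p * (if j = k then cc d K J b j j p * Dl N j Dh y p else cc d K J b j k p * Dl N k D y p)))"
    by (intro sum.cong refl) (simp add: term_jk)
  also have "\<dots> = - (\<Sum>j<d. \<Sum>k<d. \<Sum>p\<in>G. Hd d Hx p * Dl N j D x p * cc d K J b j k p * Dl N k D y p)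
       - (\<Sum>j<d. \<Sum>k<d. (if j = k then qf G x (Rdir d N Hx R j (cc d K J b j j)) y else 0))
       + (\<Sum>j<d. \<Sum>k<d. Bd j (\<lambda>p. x p * (if j = k then cc d K J b j j p * Dl N j Dh y p else cc d K J b j k p * Dl N k D y p)))"
    by (simp only: sum.distrib sum_subtractf sum_negf)
  also have "(\<Sum>j<d. \<Sum>k<d. (if j = k then qf G x (Rdir d N Hx R j (cc d K J b j j)) y else 0))
      = (\<Sum>k<d. qf G x (Rdir d N Hx R k (eta d K J b k)) y)"
    by (simp add: cc_eta)
  also have "(\<Sum>j<d. \<Sum>k<d. Bd j (\<lambda>p. x p * (if j = k then cc d K J b j j p * Dl N j Dh y p else cc d K J b j k p * Dl N k D y p)))
      = (\<Sum>j<d. Bd j (\<lambda>p. x p * W K J b y j p))"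
    unfolding W_def by (rule sum.cong[OF refl]) (rule Bd_sum'[symmetric])
  finally show ?thesis unfolding interior .
qed

end




context sbp
begin

lemma facepts_G: "q \<in> facepts d N f \<Longrightarrow> q \<in> G"
  by (simp add: facepts_def)

lemma ftr_eq: "q \<in> facepts d N f \<Longrightarrow> ftr d N f u q = u q"
proof -
  assume q: "q \<in> facepts d N f"
  have "ftr d N f u q = (\<Sum>p\<in>G. if p = q then u q else 0)"
    unfolding ftr_def by (rule sum.cong) (use q in \<open>auto simp: ef_def\<close>)
  then show ?thesis using facepts_G[OF q] finite_grid by simp
qed

lemma Hf_eq:
  assumes f: "fst f < d" and q: "q \<in> facepts d N f" and q': "q' \<in> facepts d N f"
  shows "Hf d Hx f q q' = (if q = q' then Hoth d Hx (fst f) q else 0)"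
proof (cases "q = q'")
  case True then show ?thesis by (simp add: Hf_def Hoth_def)
next
  case False
  then obtain l where l: "q l \<noteq> q' l" by (auto simp: fun_eq_iff)
  have qG: "q \<in> G" "q' \<in> G" using q q' by (auto simp: facepts_def)
  have "l < d"
  proof (rule ccontr)
    assume "\<not> l < d" then show False using l qG by (auto simp: grid_def)
  qed
  have "l \<noteq> fst f" using l q q' by (auto simp: facepts_def)
  have "Hx (q l) (q' l) = 0" using Hdiag[of "q l" "q' l"] l qG \<open>l < d\<close> by (auto simp: grid_def)
  then have "Hf d Hx f q q' = 0" unfolding Hf_def using \<open>l < d\<close> \<open>l \<noteq> fst f\<close>
    by (subst prod.remove[of _ l]) auto
  then show ?thesis using False by simp
qed

lemma bformP_eq:
  "bformP d N Hx gam (\<lambda>f. x) V = (\<Sum>f\<in>faces d. \<Sum>q\<in>facepts d N f. x q * Hoth d Hx (fst f) q * (gam f q * V f q))"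
  unfolding bformP_def bform_def
proof (rule sum.cong[OF refl])
  fix f assume f: "f \<in> faces d"
  then have fd: "fst f < d" by (auto simp: faces_def)
  show "(\<Sum>q\<in>facepts d N f. \<Sum>q'\<in>facepts d N f. ftr d N f x q * Hf d Hx f q q' * ftr d N f (\<lambda>p. gam f p * V f p) q')
      = (\<Sum>q\<in>facepts d N f. x q * Hoth d Hx (fst f) q * (gam f q * V f q))"
  proof (rule sum.cong[OF refl])
    fix q assume q: "q \<in> facepts d N f"
    have fin: "finite (facepts d N f)" using finite_grid by (rule finite_subset[rotated]) (auto simp: facepts_def)
    have "(\<Sum>q'\<in>facepts d N f. ftr d N f x q * Hf d Hx f q q' * ftr d N f (\<lambda>p. gam f p * V f p) q')
        = (\<Sum>q'\<in>facepts d N f. if q' = q then x q * Hoth d Hx (fst f) q * (gam f q * V f q) else 0)"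
      by (rule sum.cong[OF refl]) (auto simp: ftr_eq q Hf_eq[OF fd q])
    then show "(\<Sum>q'\<in>facepts d N f. ftr d N f x q * Hf d Hx f q q' * ftr d N f (\<lambda>p. gam f p * V f p) q')
      = x q * Hoth d Hx (fst f) q * (gam f q * V f q)" using fin q by simp
  qed
qed

lemma sum_faces: "(\<Sum>f\<in>faces d. F f) = (\<Sum>j<d. F (j, True) + F (j, False))"
proof -
  have "(\<Sum>f\<in>faces d. F f) = (\<Sum>j<d. \<Sum>s\<in>UNIV. F (j, s))"
    unfolding faces_def by (simp add: sum.cartesian_product)
  also have "\<dots> = (\<Sum>j<d. F (j, True) + F (j, False))"
    by (simp add: UNIV_bool add.commute)
  finally show ?thesis .
qed

lemma Bd_faces: "j < d \<Longrightarrow> Bd j F = (\<Sum>q\<in>facepts d N (j, True). Hoth d Hx j q * F q) - (\<Sum>q\<in>facepts d N (j, False). Hoth d Hx j q * F q)"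
proof -
  assume j: "j < d"
  have e: "N - 1 < N" "0 < N" using N2 by auto
  have "Bd j F = (\<Sum>p\<in>G0 d N j. Hoth d Hx j (p(j := N-1)) * F (p(j := N - 1))) - (\<Sum>p\<in>G0 d N j. Hoth d Hx j (p(j := 0)) * F (p(j := 0)))"
    unfolding Bd_def by (simp add: Hoth_upd right_diff_distrib sum_subtractf)
  also have "\<dots> = (\<Sum>q\<in>{q \<in> G. q j = N - 1}. Hoth d Hx j q * F q) - (\<Sum>q\<in>{q \<in> G. q j = 0}. Hoth d Hx j q * F q)"
    using sum_face[OF j e(1), of "\<lambda>q. Hoth d Hx j q * F q"] sum_face[OF j e(2), of "\<lambda>q. Hoth d Hx j q * F q"] by simp
  finally show ?thesis by (simp add: facepts_def)
qed

lemma sum_if_eq: "j < (d::nat) \<Longrightarrow> (\<Sum>k<d. if j = k then A else B k) = (\<Sum>k<d. B k) - B j + (A::real)"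
proof -
  assume j: "j < d"
  have "(\<Sum>k<d. if j = k then A else B k) = (\<Sum>k<d. B k + (if k = j then A - B j else 0))"
    by (rule sum.cong) auto
  then show ?thesis using j by (simp add: sum.distrib)
qed

lemma nu_sum: "j < d \<Longrightarrow> (\<Sum>j'<d. nu (j, s) j' * F j') = (if s then 1 else -1) * F j"
proof -
  assume j: "j < d"
  have "(\<Sum>j'<d. nu (j, s) j' * F j') = (\<Sum>j'<d. if j' = j then (if s then 1 else -1) * F j else 0)"
    by (rule sum.cong) (auto simp: nu_def)
  then show ?thesis using j by simp
qed

lemma Dn_face:
  assumes j: "j < d" and q: "q \<in> facepts d N (j, s)" and g: "gam (j, s) q \<noteq> 0"
  shows "gam (j, s) q * (b q * Dn d N D Dh K J gam (j, s) y q) = (if s then 1 else -1) * W K J b y j q"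
proof -
  define \<sigma> :: real where "\<sigma> = (if s then 1 else -1)"
  define g where "g = gam (j, s) q"
  have qG: "q \<in> G" using facepts_G[OF q] .
  have Mk: "k < d \<Longrightarrow> mvec G (kdir k D) y q = Dl N k D y q" for k using mvec_kdir[OF qG] by simp
  have Mk': "k < d \<Longrightarrow> mvec G (kdir k (\<lambda>m n. D m n - Dh m n)) y q = Dl N k D y q - Dl N k Dh y q" for k
    using mvec_kdir[OF qG] by (simp add: Dl_def left_diff_distrib sum_subtractf)
  have n1: "(\<Sum>i<d. \<Sum>j'<d. \<Sum>k<d. nu (j, s) j' * alpha K J i j' i k q / g * mvec G (kdir k D) y q)
      = \<sigma> / g * (\<Sum>k<d. (\<Sum>i<d. alpha K J i j i k q) * Dl N k D y q)"
  proof -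
    have "(\<Sum>i<d. \<Sum>j'<d. \<Sum>k<d. nu (j, s) j' * alpha K J i j' i k q / g * mvec G (kdir k D) y q)
       = (\<Sum>i<d. \<Sum>j'<d. nu (j, s) j' * (\<Sum>k<d. alpha K J i j' i k q / g * Dl N k D y q))"
      by (intro sum.cong refl) (simp add: Mk sum_distrib_left mult_ac)
    also have "\<dots> = (\<Sum>i<d. \<sigma> * (\<Sum>k<d. alpha K J i j i k q / g * Dl N k D y q))"
      by (rule sum.cong[OF refl]) (simp add: nu_sum[OF j] \<sigma>_def)
    also have "\<dots> = \<sigma> / g * (\<Sum>i<d. \<Sum>k<d. alpha K J i j i k q * Dl N k D y q)"
      by (simp add: sum_distrib_left mult_ac)
    also have "(\<Sum>i<d. \<Sum>k<d. alpha K J i j i k q * Dl N k D y q) = (\<Sum>k<d. (\<Sum>i<d. alpha K J i j i k q) * Dl N k D y q)"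
      by (subst sum.swap) (simp add: sum_distrib_right)
    finally show ?thesis .
  qed
  have n2: "(\<Sum>k<d. nu (j, s) k * (\<Sum>i<d. alpha K J i k i k q) / g * mvec G (kdir k (\<lambda>m n. D m n - Dh m n)) y q)
      = \<sigma> / g * ((\<Sum>i<d. alpha K J i j i j q) * (Dl N j D y q - Dl N j Dh y q))"
  proof -
    have "(\<Sum>k<d. nu (j, s) k * (\<Sum>i<d. alpha K J i k i k q) / g * mvec G (kdir k (\<lambda>m n. D m n - Dh m n)) y q)
       = (\<Sum>k<d. nu (j, s) k * ((\<Sum>i<d. alpha K J i k i k q) / g * (Dl N k D y q - Dl N k Dh y q)))"
      by (intro sum.cong refl) (simp add: Mk')
    also have "\<dots> = \<sigma> * ((\<Sum>i<d. alpha K J i j i j q) / g * (Dl N j D y q - Dl N j Dh y q))"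
      unfolding \<sigma>_def by (rule nu_sum[OF j])
    finally show ?thesis by simp
  qed
  have Wq: "W K J b y j q = b q * (\<Sum>k<d. (\<Sum>i<d. alpha K J i j i k q) * Dl N k D y q)
      - b q * ((\<Sum>i<d. alpha K J i j i j q) * (Dl N j D y q - Dl N j Dh y q))"
    unfolding W_def sum_if_eq[OF j] by (simp add: cc_def sum_distrib_left algebra_simps)
  have Dneq: "Dn d N D Dh K J gam (j, s) y q = \<sigma> / g * (\<Sum>k<d. (\<Sum>i<d. alpha K J i j i k q) * Dl N k D y q)
      - \<sigma> / g * ((\<Sum>i<d. alpha K J i j i j q) * (Dl N j D y q - Dl N j Dh y q))"
    unfolding Dn_def g_def[symmetric] n1 n2 ..
  show ?thesis unfolding Wq g_def[symmetric] \<sigma>_def[symmetric] Dneq using g[folded g_def]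
    by (simp add: field_simps)
qed

lemma BOUND:
  assumes gam: "\<forall>f\<in>faces d. \<forall>p\<in>facepts d N f. 0 < gam f p"
  shows "(\<Sum>j<d. Bd j (\<lambda>p. x p * W K J b y j p))
       = bformP d N Hx gam (\<lambda>f. x) (\<lambda>f p. b p * Dn d N D Dh K J gam f y p)"
proof -
  have face: "(\<Sum>q\<in>facepts d N (j, s). x q * Hoth d Hx j q * (gam (j, s) q * (b q * Dn d N D Dh K J gam (j, s) y q)))
     = (if s then 1 else -1) * (\<Sum>q\<in>facepts d N (j, s). Hoth d Hx j q * (x q * W K J b y j q))" if j: "j < d" for j s
  proof -
    have "(\<Sum>q\<in>facepts d N (j, s). x q * Hoth d Hx j q * (gam (j, s) q * (b q * Dn d N D Dh K J gam (j, s) y q)))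
       = (\<Sum>q\<in>facepts d N (j, s). (if s then 1 else -1) * (Hoth d Hx j q * (x q * W K J b y j q)))"
    proof (rule sum.cong[OF refl])
      fix q assume q: "q \<in> facepts d N (j, s)"
      have "gam (j, s) q \<noteq> 0" using gam j q by (fastforce simp: faces_def)
      then show "x q * Hoth d Hx j q * (gam (j, s) q * (b q * Dn d N D Dh K J gam (j, s) y q))
          = (if s then 1 else -1) * (Hoth d Hx j q * (x q * W K J b y j q))"
        using Dn_face[OF j q] by simp
    qed
    then show ?thesis by (simp add: sum_distrib_left)
  qed
  show ?thesis
    unfolding bformP_eq sum_faces
    by (rule sum.cong[OF refl]) (simp add: face Bd_faces)
qed

end




context sbp
begin

lemma qf_kall: "qf G x (kall d Hx) y = (\<Sum>p\<in>G. x p * Hd d Hx p * y p)"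
  unfolding qf_def
proof (rule sum.cong[OF refl])
  fix p assume p: "p \<in> G"
  have "(\<Sum>q\<in>G. x p * kall d Hx p q * y q) = (\<Sum>q\<in>G. if q = p then x p * Hd d Hx p * y p else 0)"
    by (rule sum.cong[OF refl]) (auto simp: kall_diag[OF p])
  then show "(\<Sum>q\<in>G. x p * kall d Hx p q * y q) = x p * Hd d Hx p * y p" using p finite_grid by simp
qed

lemma vformP_eq: "vformP d N Hx J f g = (\<Sum>p\<in>G. Hd d Hx p * J p * f p * g p)"
  unfolding vformP_def qf_kall by (simp add: mult_ac)

definition cD :: "(nat \<Rightarrow> nat \<Rightarrow> gfun) \<Rightarrow> nat \<Rightarrow> gpt \<Rightarrow> gpt \<Rightarrow> real" where
  "cD K i p q = (\<Sum>j<d. K i j p * kdir j D p q)"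

lemma Dx_lin: "Dx d N D K i x p = (\<Sum>q\<in>G. cD K i p q * x q)"
  unfolding Dx_def mvec_def cD_def
  by (simp add: sum_distrib_left sum_distrib_right mult_ac sum.swap[of _ "{..<d}"])

lemma lin_deriv:
  assumes "\<forall>q\<in>G. ((\<lambda>s. u s q) has_real_derivative u' q) (at t)"
  shows "((\<lambda>s. \<Sum>q\<in>G. c q * u s q) has_real_derivative (\<Sum>q\<in>G. c q * u' q)) (at t)"
  by (rule DERIV_sum) (use assms in \<open>auto intro: DERIV_cmult\<close>)

lemma eta_nonneg:
  assumes "\<forall>p\<in>G. 0 < J p \<and> 0 < a p \<and> 0 < b p" "p \<in> G"
  shows "0 \<le> eta d K J b k p"
  unfolding eta_def alpha_def
proof (rule mult_nonneg_nonneg)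
  show "0 \<le> (\<Sum>i<d. K i k p * J p * K i k p)"
  proof (rule sum_nonneg)
    fix i
    have J: "0 \<le> J p" using assms by (auto intro: less_imp_le)
    have "0 \<le> K i k p * K i k p" by simp
    then have "0 \<le> (K i k p * K i k p) * J p" using J by (rule mult_nonneg_nonneg)
    then show "0 \<le> K i k p * J p * K i k p" by (metis mult.commute mult.assoc)
  qed
  show "0 \<le> b p" using assms by auto
qed

lemma gline_nonneg: "(\<forall>q\<in>G. 0 \<le> c q) \<Longrightarrow> p \<in> G \<Longrightarrow> k < d \<Longrightarrow> \<forall>m<N. 0 \<le> gline N k c p m"
  by (auto simp: gline_def grid_upd)

lemma Rdir_sym:
  assumes c: "\<forall>q\<in>G. 0 \<le> c q" and p: "p \<in> G" and q: "q \<in> G" and k: "k < d"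
  shows "Rdir d N Hx R k c p q = Rdir d N Hx R k c q p"
proof (cases "\<forall>l. l \<noteq> k \<longrightarrow> p l = q l")
  case True
  have Ho: "Hoth d Hx k p = Hoth d Hx k q" unfolding Hoth_def by (rule prod.cong) (use True in auto)
  have gl: "gline N k c p = gline N k c q"
  proof -
    have e: "p(k := m) = q(k := m)" for m using True by (auto simp: fun_eq_iff)
    show ?thesis unfolding gline_def e ..
  qed
  have "R (gline N k c p) (p k) (q k) = R (gline N k c p) (q k) (p k)"
    using psd gline_nonneg[OF c p k] grid_lt[OF p k] grid_lt[OF q k] unfolding rem_psd_def by blast
  moreover have "\<forall>l. l \<noteq> k \<longrightarrow> q l = p l" using True by auto
  ultimately show ?thesis using True by (simp add: Rdir_eq[OF p q k] Rdir_eq[OF q p k] Ho gl)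
next
  case False
  then have n2: "\<not> (\<forall>l. l \<noteq> k \<longrightarrow> q l = p l)" by auto
  show ?thesis by (simp only: Rdir_eq[OF p q k] Rdir_eq[OF q p k] False n2 if_False)
qed

lemma qf_nonneg:
  assumes c: "\<forall>q\<in>G. 0 \<le> c q" and k: "k < d"
  shows "0 \<le> qf G x (Rdir d N Hx R k c) x"
  unfolding QR[OF k]
proof (rule sum_nonneg)
  fix p assume p0: "p \<in> G0 d N k"
  then have p: "p \<in> G" by (simp add: G0_def)
  have "(\<forall>m<N. 0 \<le> gline N k c p m) \<longrightarrow>
     (\<forall>k'<N. \<forall>l<N. R (gline N k c p) k' l = R (gline N k c p) l k') \<and>
     (\<forall>v. 0 \<le> (\<Sum>k'<N. \<Sum>l<N. v k' * R (gline N k c p) k' l * v l))"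
    using psd unfolding rem_psd_def by (rule spec)
  then have "\<forall>v. 0 \<le> (\<Sum>k'<N. \<Sum>l<N. v k' * R (gline N k c p) k' l * v l)"
    using gline_nonneg[OF c p k] by simp
  then have "0 \<le> (\<Sum>k'<N. \<Sum>l<N. (\<lambda>m. x (p(k:=m))) k' * R (gline N k c p) k' l * (\<lambda>m. x (p(k:=m))) l)"
    by (rule spec)
  then have "0 \<le> (\<Sum>k'<N. \<Sum>l<N. x (p(k:=k')) * R (gline N k c p) k' l * x (p(k:=l)))"
    by simp
  then show "0 \<le> Hoth d Hx k p * (\<Sum>k'<N. \<Sum>l<N. x (p(k:=k')) * R (gline N k c p) k' l * x (p(k:=l)))"
    using Hoth_pos[OF p, of k] by simp
qed

lemma qf_sym_deriv:
  assumes sym: "\<forall>p\<in>G. \<forall>q\<in>G. A p q = A q p"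
    and du: "\<forall>q\<in>G. ((\<lambda>s. u s q) has_real_derivative u' q) (at t)"
  shows "((\<lambda>s. qf G (u s) A (u s)) has_real_derivative 2 * qf G u' A (u t)) (at t)"
proof -
  have "((\<lambda>s. qf G (u s) A (u s)) has_real_derivative
       (\<Sum>p\<in>G. \<Sum>q\<in>G. u' p * A p q * u t q + u t p * A p q * u' q)) (at t)"
    unfolding qf_def
  proof (intro DERIV_sum)
    fix p q assume p: "p \<in> G" and q: "q \<in> G"
    have "((\<lambda>s. u s p * A p q * u s q) has_real_derivative (u' p * A p q * u t q + u t p * A p q * u' q)) (at t)"
      using DERIV_mult[OF DERIV_cmult_right[OF du[rule_format, OF p], of "A p q"] du[rule_format, OF q]]
      by (simp add: algebra_simps)
    then show "((\<lambda>s. u s p * A p q * u s q) has_real_derivative (u' p * A p q * u t q + u t p * A p q * u' q)) (at t)" .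
  qed
  moreover have "(\<Sum>p\<in>G. \<Sum>q\<in>G. u' p * A p q * u t q + u t p * A p q * u' q) = 2 * qf G u' A (u t)"
  proof -
    have "(\<Sum>p\<in>G. \<Sum>q\<in>G. u t p * A p q * u' q) = (\<Sum>q\<in>G. \<Sum>p\<in>G. u t p * A p q * u' q)"
      by (rule sum.swap)
    also have "\<dots> = (\<Sum>q\<in>G. \<Sum>p\<in>G. u' q * A q p * u t p)"
      by (intro sum.cong refl) (simp add: sym mult_ac)
    finally have "(\<Sum>p\<in>G. \<Sum>q\<in>G. u t p * A p q * u' q) = qf G u' A (u t)" by (simp add: qf_def)
    then show ?thesis by (simp add: sum.distrib qf_def)
  qed
  ultimately show ?thesis by simp
qed

end




context sbp
begin

lemma energy_eq:
  assumes pos: "\<forall>p\<in>G. 0 < J p \<and> 0 < a p \<and> 0 < b p"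
  shows "energy d N Hx D R K J a b u v
    = 1/2 * (\<Sum>p\<in>G. (Hd d Hx p * J p * a p) * (v p * v p))
    + 1/2 * (\<Sum>i<d. \<Sum>p\<in>G. (Hd d Hx p * (J p * b p)) * (Dx d N D K i u p * Dx d N D K i u p))
    + 1/2 * (\<Sum>k<d. qf G u (Rdir d N Hx R k (eta d K J b k)) u)"
proof -
  have sa: "sqrt (a p) * sqrt (a p) = a p" "sqrt (b p) * sqrt (b p) = b p" if "p \<in> G" for p
  proof -
    have "0 < a p" "0 < b p" using pos that by auto
    then show "sqrt (a p) * sqrt (a p) = a p" "sqrt (b p) * sqrt (b p) = b p" by simp_all
  qed
  have e1: "vformP d N Hx J (\<lambda>p. sqrt (a p) * v p) (\<lambda>p. sqrt (a p) * v p) = (\<Sum>p\<in>G. (Hd d Hx p * J p * a p) * (v p * v p))"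
    unfolding vformP_eq
  proof (rule sum.cong[OF refl])
    fix p assume p: "p \<in> G"
    have "Hd d Hx p * J p * (sqrt (a p) * v p) * (sqrt (a p) * v p) = Hd d Hx p * J p * (sqrt (a p) * sqrt (a p)) * (v p * v p)"
      by (simp only: mult_ac)
    then show "Hd d Hx p * J p * (sqrt (a p) * v p) * (sqrt (a p) * v p) = Hd d Hx p * J p * a p * (v p * v p)"
      by (simp only: sa(1)[OF p])
  qed
  have e2: "vformP d N Hx J (\<lambda>p. sqrt (b p) * Dx d N D K i u p) (\<lambda>p. sqrt (b p) * Dx d N D K i u p)
     = (\<Sum>p\<in>G. (Hd d Hx p * (J p * b p)) * (Dx d N D K i u p * Dx d N D K i u p))" for i
    unfolding vformP_eq
  proof (rule sum.cong[OF refl])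
    fix p assume p: "p \<in> G"
    have "Hd d Hx p * J p * (sqrt (b p) * Dx d N D K i u p) * (sqrt (b p) * Dx d N D K i u p)
       = Hd d Hx p * (J p * (sqrt (b p) * sqrt (b p))) * (Dx d N D K i u p * Dx d N D K i u p)"
      by (simp only: mult_ac)
    then show "Hd d Hx p * J p * (sqrt (b p) * Dx d N D K i u p) * (sqrt (b p) * Dx d N D K i u p)
       = Hd d Hx p * (J p * b p) * (Dx d N D K i u p * Dx d N D K i u p)"
      by (simp only: sa(2)[OF p])
  qed
  show ?thesis unfolding energy_def e1 e2 ..
qed

lemma energy_nonneg:
  assumes pos: "\<forall>p\<in>G. 0 < J p \<and> 0 < a p \<and> 0 < b p"
  shows "0 \<le> energy d N Hx D R K J a b u v"
proof -
  have "0 \<le> (\<Sum>p\<in>G. (Hd d Hx p * J p * a p) * (v p * v p))"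
  proof (rule sum_nonneg)
    fix p assume p: "p \<in> G"
    have "0 < Hd d Hx p * J p * a p" using pos p Hd_pos[OF p] by simp
    then show "0 \<le> (Hd d Hx p * J p * a p) * (v p * v p)" by (simp add: mult_nonneg_nonneg)
  qed
  moreover have "0 \<le> (\<Sum>i<d. \<Sum>p\<in>G. (Hd d Hx p * (J p * b p)) * (Dx d N D K i u p * Dx d N D K i u p))"
  proof (intro sum_nonneg)
    fix p i assume p: "p \<in> G"
    have "0 < Hd d Hx p * (J p * b p)" using pos p Hd_pos[OF p] by simp
    then show "0 \<le> (Hd d Hx p * (J p * b p)) * (Dx d N D K i u p * Dx d N D K i u p)" by (simp add: mult_nonneg_nonneg)
  qed
  moreover have "0 \<le> (\<Sum>k<d. qf G u (Rdir d N Hx R k (eta d K J b k)) u)"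
    by (rule sum_nonneg) (use qf_nonneg eta_nonneg[OF pos] in auto)
  ultimately show ?thesis unfolding energy_eq[OF pos] by simp
qed

lemma energy_deriv:
  assumes pos: "\<forall>p\<in>G. 0 < J p \<and> 0 < a p \<and> 0 < b p"
    and du: "\<forall>p\<in>G. ((\<lambda>s. u s p) has_real_derivative u' t p) (at t)"
    and dv: "\<forall>p\<in>G. ((\<lambda>s. u' s p) has_real_derivative u'' t p) (at t)"
  shows "((\<lambda>s. energy d N Hx D R K J a b (u s) (u' s)) has_real_derivative
     (\<Sum>p\<in>G. (Hd d Hx p * J p * a p) * (u' t p * u'' t p))
     + (\<Sum>i<d. \<Sum>p\<in>G. Hd d Hx p * (J p * b p) * Dx d N D K i (u' t) p * Dx d N D K i (u t) p)
     + (\<Sum>k<d. qf G (u' t) (Rdir d N Hx R k (eta d K J b k)) (u t))) (at t)"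
proof -
  have dx: "((\<lambda>s. Dx d N D K i (u s) p) has_real_derivative Dx d N D K i (u' t) p) (at t)" for i p
    unfolding Dx_lin by (rule lin_deriv) (use du in auto)
  have D1: "((\<lambda>s. \<Sum>p\<in>G. (Hd d Hx p * J p * a p) * (u' s p * u' s p)) has_real_derivative
       (\<Sum>p\<in>G. (Hd d Hx p * J p * a p) * (u'' t p * u' t p + u'' t p * u' t p))) (at t)"
    by (rule DERIV_sum, rule DERIV_cmult, rule DERIV_mult) (use dv in auto)
  have D2: "((\<lambda>s. \<Sum>i<d. \<Sum>p\<in>G. (Hd d Hx p * (J p * b p)) * (Dx d N D K i (u s) p * Dx d N D K i (u s) p)) has_real_derivative
       (\<Sum>i<d. \<Sum>p\<in>G. (Hd d Hx p * (J p * b p)) * (Dx d N D K i (u' t) p * Dx d N D K i (u t) p + Dx d N D K i (u' t) p * Dx d N D K i (u t) p))) (at t)"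
    by (rule DERIV_sum, rule DERIV_sum, rule DERIV_cmult, rule DERIV_mult) (rule dx)+
  have D3: "((\<lambda>s. \<Sum>k<d. qf G (u s) (Rdir d N Hx R k (eta d K J b k)) (u s)) has_real_derivative
       (\<Sum>k<d. 2 * qf G (u' t) (Rdir d N Hx R k (eta d K J b k)) (u t))) (at t)"
  proof (rule DERIV_sum)
    fix k assume "k \<in> {..<d}"
    then have k: "k < d" by simp
    show "((\<lambda>s. qf G (u s) (Rdir d N Hx R k (eta d K J b k)) (u s)) has_real_derivative
       2 * qf G (u' t) (Rdir d N Hx R k (eta d K J b k)) (u t)) (at t)"
      by (rule qf_sym_deriv) (use Rdir_sym[OF _ _ _ k] eta_nonneg[OF pos] du in auto)
  qed
  have "((\<lambda>s. energy d N Hx D R K J a b (u s) (u' s)) has_real_derivative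
       1/2 * (\<Sum>p\<in>G. (Hd d Hx p * J p * a p) * (u'' t p * u' t p + u'' t p * u' t p))
     + 1/2 * (\<Sum>i<d. \<Sum>p\<in>G. (Hd d Hx p * (J p * b p)) * (Dx d N D K i (u' t) p * Dx d N D K i (u t) p + Dx d N D K i (u' t) p * Dx d N D K i (u t) p))
     + 1/2 * (\<Sum>k<d. 2 * qf G (u' t) (Rdir d N Hx R k (eta d K J b k)) (u t))) (at t)"
    unfolding energy_eq[OF pos]
    by (intro DERIV_add DERIV_cmult D1 D2 D3)
  moreover have "1/2 * (\<Sum>p\<in>G. (Hd d Hx p * J p * a p) * (u'' t p * u' t p + u'' t p * u' t p))
      = (\<Sum>p\<in>G. (Hd d Hx p * J p * a p) * (u' t p * u'' t p))"
    by (simp add: sum_distrib_left algebra_simps)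
  moreover have "1/2 * (\<Sum>i<d. \<Sum>p\<in>G. (Hd d Hx p * (J p * b p)) * (Dx d N D K i (u' t) p * Dx d N D K i (u t) p + Dx d N D K i (u' t) p * Dx d N D K i (u t) p))
      = (\<Sum>i<d. \<Sum>p\<in>G. Hd d Hx p * (J p * b p) * Dx d N D K i (u' t) p * Dx d N D K i (u t) p)"
    by (simp add: sum_distrib_left algebra_simps)
  moreover have "1/2 * (\<Sum>k<d. 2 * qf G (u' t) (Rdir d N Hx R k (eta d K J b k)) (u t))
      = (\<Sum>k<d. qf G (u' t) (Rdir d N Hx R k (eta d K J b k)) (u t))"
    by (simp add: sum_distrib_left)
  ultimately show ?thesis by simp
qed

end




context sbp
begin

lemma fin_facepts: "finite (facepts d N f)"
  using finite_grid by (rule finite_subset[rotated]) (auto simp: facepts_def)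

lemma fext_eq: "fext d N f w p = (if p \<in> facepts d N f then w p else 0)"
proof -
  have "fext d N f w p = (\<Sum>q\<in>facepts d N f. if q = p then w p else 0)"
    unfolding fext_def ef_def by (rule sum.cong[OF refl]) auto
  then show ?thesis using fin_facepts by simp
qed

lemma sat_eq:
  assumes gam: "\<forall>f\<in>faces d. \<forall>p\<in>facepts d N f. 0 < gam f p"
  shows "qf G x (kall d Hx) (\<lambda>p. sat_neumann d N Hx D Dh K J b gam y p)
     = - bformP d N Hx gam (\<lambda>f. x) (\<lambda>f p. b p * Dn d N D Dh K J gam f y p)"
proof -
  define w where "w f r = gam f r * (\<Sum>r'\<in>facepts d N f. Hf d Hx f r r' *
                    (b r' * (ftr d N f (Dn d N D Dh K J gam f y) r' - 0)))" for f r
  define \<Phi> where "\<Phi> q = (\<Sum>f\<in>faces d. fext d N f (w f) q)" for q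
  have sat: "sat_neumann d N Hx D Dh K J b gam y p = - (\<Phi> p / Hd d Hx p)" if p: "p \<in> G" for p
  proof -
    have "mvec G (dinv (kall d Hx)) \<Phi> p = (\<Sum>q\<in>G. if q = p then \<Phi> p / Hd d Hx p else 0)"
      unfolding mvec_def by (rule sum.cong[OF refl]) (auto simp: dinv_def kall_def Hd_def)
    then have "mvec G (dinv (kall d Hx)) \<Phi> p = \<Phi> p / Hd d Hx p" using p finite_grid by simp
    then show ?thesis unfolding sat_neumann_def \<Phi>_def w_def by simp
  qed
  have "qf G x (kall d Hx) (\<lambda>p. sat_neumann d N Hx D Dh K J b gam y p) = (\<Sum>p\<in>G. - (x p * \<Phi> p))"
    unfolding qf_kall
  proof (rule sum.cong[OF refl])
    fix p assume p: "p \<in> G"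
    have "Hd d Hx p \<noteq> 0" using Hd_pos[OF p] by simp
    then show "x p * Hd d Hx p * sat_neumann d N Hx D Dh K J b gam y p = - (x p * \<Phi> p)"
      by (simp add: sat[OF p])
  qed
  also have "(\<Sum>p\<in>G. - (x p * \<Phi> p)) = - (\<Sum>f\<in>faces d. \<Sum>p\<in>G. x p * fext d N f (w f) p)"
    unfolding \<Phi>_def by (simp add: sum_distrib_left sum_negf sum.swap[of _ G])
  also have "(\<Sum>f\<in>faces d. \<Sum>p\<in>G. x p * fext d N f (w f) p)
      = (\<Sum>f\<in>faces d. \<Sum>q\<in>facepts d N f. x q * Hoth d Hx (fst f) q * (gam f q * (b q * Dn d N D Dh K J gam f y q)))"
  proof (rule sum.cong[OF refl])
    fix f assume f: "f \<in> faces d"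
    then have fd: "fst f < d" by (auto simp: faces_def)
    have sub: "{p \<in> G. p \<in> facepts d N f} = facepts d N f" by (auto simp: facepts_def)
    have "(\<Sum>p\<in>G. x p * fext d N f (w f) p) = (\<Sum>p\<in>G. if p \<in> facepts d N f then x p * w f p else 0)"
      by (rule sum.cong[OF refl]) (simp add: fext_eq)
    also have "\<dots> = (\<Sum>p\<in>facepts d N f. x p * w f p)"
      using sum.inter_filter[OF finite_grid[of d N], where g="\<lambda>p. x p * w f p" and P="\<lambda>p. p \<in> facepts d N f"] sub by simp
    also have "\<dots> = (\<Sum>q\<in>facepts d N f. x q * Hoth d Hx (fst f) q * (gam f q * (b q * Dn d N D Dh K J gam f y q)))"
    proof (rule sum.cong[OF refl])
      fix q assume q: "q \<in> facepts d N f"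
      have "(\<Sum>r'\<in>facepts d N f. Hf d Hx f q r' * (b r' * (ftr d N f (Dn d N D Dh K J gam f y) r' - 0)))
          = (\<Sum>r'\<in>facepts d N f. if r' = q then Hoth d Hx (fst f) q * (b q * Dn d N D Dh K J gam f y q) else 0)"
        by (rule sum.cong[OF refl]) (auto simp: Hf_eq[OF fd q] ftr_eq)
      then have "w f q = gam f q * (Hoth d Hx (fst f) q * (b q * Dn d N D Dh K J gam f y q))"
        unfolding w_def using q fin_facepts by simp
      then show "x q * w f q = x q * Hoth d Hx (fst f) q * (gam f q * (b q * Dn d N D Dh K J gam f y q))"
        by (simp add: mult_ac)
    qed
    finally show "(\<Sum>p\<in>G. x p * fext d N f (w f) p)
      = (\<Sum>q\<in>facepts d N f. x q * Hoth d Hx (fst f) q * (gam f q * (b q * Dn d N D Dh K J gam f y q)))" .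
  qed
  finally show ?thesis unfolding bformP_eq .
qed

lemma MAIN:
  assumes pos: "\<forall>p\<in>G. 0 < J p \<and> 0 < a p \<and> 0 < b p"
    and gam: "\<forall>f\<in>faces d. \<forall>p\<in>facepts d N f. 0 < gam f p"
  shows
    "(\<forall>(u :: real \<Rightarrow> gfun) u' u'' (SAT :: real \<Rightarrow> gfun).
        (\<forall>p\<in>grid d N. \<forall>t. ((\<lambda>s. u s p) has_real_derivative u' t p) (at t)
                        \<and> ((\<lambda>s. u' s p) has_real_derivative u'' t p) (at t)
                        \<and> isCont (\<lambda>s. u'' s p) t)
      \<and> (\<forall>t. \<forall>p\<in>grid d N. J p * a p * u'' t p = scheme_rhs d N D Dxx K J b (u t) p + SAT t p)
      \<longrightarrow> (\<forall>t. ((\<lambda>s. energy d N Hx D R K J a b (u s) (u' s)) has_real_derivative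
                 (bformP d N Hx gam (\<lambda>f. u' t) (\<lambda>f p. b p * Dn d N D Dh K J gam f (u t) p)
                  + qf (grid d N) (u' t) (kall d Hx) (SAT t))) (at t)))
   \<and> (\<forall>(u :: real \<Rightarrow> gfun) u' u''.
        (\<forall>p\<in>grid d N. \<forall>t. ((\<lambda>s. u s p) has_real_derivative u' t p) (at t)
                        \<and> ((\<lambda>s. u' s p) has_real_derivative u'' t p) (at t)
                        \<and> isCont (\<lambda>s. u'' s p) t)
      \<and> (\<forall>t. \<forall>p\<in>grid d N. J p * a p * u'' t p = scheme_rhs d N D Dxx K J b (u t) p
                                   + sat_neumann d N Hx D Dh K J b gam (u t) p)
      \<longrightarrow> (\<forall>t. ((\<lambda>s. energy d N Hx D R K J a b (u s) (u' s)) has_real_derivative 0) (at t)))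
   \<and> (\<forall>u v. 0 \<le> energy d N Hx D R K J a b u v)"
proof -
  have P1: "((\<lambda>s. energy d N Hx D R K J a b (u s) (u' s)) has_real_derivative
                 (bformP d N Hx gam (\<lambda>f. u' t) (\<lambda>f p. b p * Dn d N D Dh K J gam f (u t) p)
                  + qf G (u' t) (kall d Hx) (SAT t))) (at t)"
    if hd: "\<forall>p\<in>G. \<forall>t. ((\<lambda>s. u s p) has_real_derivative u' t p) (at t)
                        \<and> ((\<lambda>s. u' s p) has_real_derivative u'' t p) (at t)"
    and sch: "\<forall>t. \<forall>p\<in>G. J p * a p * u'' t p = scheme_rhs d N D Dxx K J b (u t) p + SAT t p"
    for u u' u'' :: "real \<Rightarrow> gfun" and SAT t
  proof -
    have der: "((\<lambda>s. energy d N Hx D R K J a b (u s) (u' s)) has_real_derivative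
     (\<Sum>p\<in>G. (Hd d Hx p * J p * a p) * (u' t p * u'' t p))
     + (\<Sum>i<d. \<Sum>p\<in>G. Hd d Hx p * (J p * b p) * Dx d N D K i (u' t) p * Dx d N D K i (u t) p)
     + (\<Sum>k<d. qf G (u' t) (Rdir d N Hx R k (eta d K J b k)) (u t))) (at t)"
      by (rule energy_deriv[OF pos]) (use hd in auto)
    have A: "(\<Sum>p\<in>G. (Hd d Hx p * J p * a p) * (u' t p * u'' t p))
       = (\<Sum>p\<in>G. Hd d Hx p * u' t p * scheme_rhs d N D Dxx K J b (u t) p) + qf G (u' t) (kall d Hx) (SAT t)"
    proof -
      have "(\<Sum>p\<in>G. (Hd d Hx p * J p * a p) * (u' t p * u'' t p))
         = (\<Sum>p\<in>G. Hd d Hx p * u' t p * scheme_rhs d N D Dxx K J b (u t) p + u' t p * Hd d Hx p * SAT t p)"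
      proof (rule sum.cong[OF refl])
        fix p assume p: "p \<in> G"
        have "(Hd d Hx p * J p * a p) * (u' t p * u'' t p) = Hd d Hx p * u' t p * (J p * a p * u'' t p)"
          by (simp add: mult_ac)
        also have "\<dots> = Hd d Hx p * u' t p * (scheme_rhs d N D Dxx K J b (u t) p + SAT t p)"
          using sch p by simp
        finally show "(Hd d Hx p * J p * a p) * (u' t p * u'' t p)
           = Hd d Hx p * u' t p * scheme_rhs d N D Dxx K J b (u t) p + u' t p * Hd d Hx p * SAT t p"
          by (simp add: algebra_simps)
      qed
      then show ?thesis by (simp add: sum.distrib qf_kall)
    qed
    have B: "(\<Sum>p\<in>G. Hd d Hx p * u' t p * scheme_rhs d N D Dxx K J b (u t) p)
       = - (\<Sum>i<d. \<Sum>p\<in>G. Hd d Hx p * (J p * b p) * Dx d N D K i (u' t) p * Dx d N D K i (u t) p)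
         - (\<Sum>k<d. qf G (u' t) (Rdir d N Hx R k (eta d K J b k)) (u t))
         + bformP d N Hx gam (\<lambda>f. u' t) (\<lambda>f p. b p * Dn d N D Dh K J gam f (u t) p)"
      using GREEN[of "u' t" K J b "u t"] BOUND[OF gam, of "u' t" K J b "u t"] by simp
    show ?thesis using der unfolding A B by simp
  qed
  show ?thesis
  proof (intro conjI allI impI)
    fix u u' u'' :: "real \<Rightarrow> gfun" and SAT t
    assume h: "(\<forall>p\<in>grid d N. \<forall>t. ((\<lambda>s. u s p) has_real_derivative u' t p) (at t)
                        \<and> ((\<lambda>s. u' s p) has_real_derivative u'' t p) (at t)
                        \<and> isCont (\<lambda>s. u'' s p) t)
      \<and> (\<forall>t. \<forall>p\<in>grid d N. J p * a p * u'' t p = scheme_rhs d N D Dxx K J b (u t) p + SAT t p)"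
    show "((\<lambda>s. energy d N Hx D R K J a b (u s) (u' s)) has_real_derivative
                 (bformP d N Hx gam (\<lambda>f. u' t) (\<lambda>f p. b p * Dn d N D Dh K J gam f (u t) p)
                  + qf (grid d N) (u' t) (kall d Hx) (SAT t))) (at t)"
      by (rule P1) (use h in auto)
  next
    fix u u' u'' :: "real \<Rightarrow> gfun" and t
    assume h: "(\<forall>p\<in>grid d N. \<forall>t. ((\<lambda>s. u s p) has_real_derivative u' t p) (at t)
                        \<and> ((\<lambda>s. u' s p) has_real_derivative u'' t p) (at t)
                        \<and> isCont (\<lambda>s. u'' s p) t)
      \<and> (\<forall>t. \<forall>p\<in>grid d N. J p * a p * u'' t p = scheme_rhs d N D Dxx K J b (u t) p
                                   + sat_neumann d N Hx D Dh K J b gam (u t) p)"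
    have "((\<lambda>s. energy d N Hx D R K J a b (u s) (u' s)) has_real_derivative
                 (bformP d N Hx gam (\<lambda>f. u' t) (\<lambda>f p. b p * Dn d N D Dh K J gam f (u t) p)
                  + qf G (u' t) (kall d Hx) (\<lambda>p. sat_neumann d N Hx D Dh K J b gam (u t) p))) (at t)"
      by (rule P1[where SAT = "\<lambda>t p. sat_neumann d N Hx D Dh K J b gam (u t) p"]) (use h in auto)
    then show "((\<lambda>s. energy d N Hx D R K J a b (u s) (u' s)) has_real_derivative 0) (at t)"
      unfolding sat_eq[OF gam] by simp
  next
    fix u v
    show "0 \<le> energy d N Hx D R K J a b u v" by (rule energy_nonneg[OF pos])
  qed
qed

end


lemma norm_facts:
  assumes N: "2 \<le> N" and h: "h = 1 / (real N - 1)" and nrm: "sbp_norm N h Hx"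
  shows "\<And>k l. k < N \<Longrightarrow> l < N \<Longrightarrow> k \<noteq> l \<Longrightarrow> Hx k l = 0"
    and "\<And>k. k < N \<Longrightarrow> 0 < Hx k k"
proof -
  obtain s w where sw: "2 * s \<le> N" "\<forall>k<s. (0::real) < w k"
    and H: "\<forall>k<N. \<forall>l<N. Hx k l = (if k = l then h * (if k < s then w k
                                           else if N - 1 - k < s then w (N - 1 - k) else 1)
                               else 0)"
    using nrm unfolding sbp_norm_def by blast
  have hp: "0 < h" using N h by simp
  show "\<And>k l. k < N \<Longrightarrow> l < N \<Longrightarrow> k \<noteq> l \<Longrightarrow> Hx k l = 0" using H by simp
  show "0 < Hx k k" if k: "k < N" for k
  proof -
    have "0 < (if k < s then w k else if N - 1 - k < s then w (N - 1 - k) else 1)"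
      using sw(2) by auto
    then show ?thesis using H k hp by simp
  qed
qed

theorem mainTheorem1:
  fixes d N :: nat and h :: real
    and Hx D Dh :: mat1
    and Dxx R :: "(nat \<Rightarrow> real) \<Rightarrow> mat1"
    and K :: "nat \<Rightarrow> nat \<Rightarrow> gfun" and J a b :: gfun and gam :: "face \<Rightarrow> gfun"
  assumes "1 \<le> d" and "2 \<le> N" and "h = 1 / (real N - 1)"
    and "sbp_norm N h Hx"
    and "sbp_first N Hx D"
    and "sbp_second N Hx D Dh Dxx R"
    and "rem_linear N R" and "rem_psd N R"
    and "\<forall>p\<in>grid d N. 0 < J p \<and> 0 < a p \<and> 0 < b p"
    and "\<forall>f\<in>faces d. \<forall>p\<in>facepts d N f. 0 < gam f p"
  shows
    "(\<forall>(u :: real \<Rightarrow> gfun) u' u'' (SAT :: real \<Rightarrow> gfun).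
        (\<forall>p\<in>grid d N. \<forall>t. ((\<lambda>s. u s p) has_real_derivative u' t p) (at t)
                        \<and> ((\<lambda>s. u' s p) has_real_derivative u'' t p) (at t)
                        \<and> isCont (\<lambda>s. u'' s p) t)
      \<and> (\<forall>t. \<forall>p\<in>grid d N. J p * a p * u'' t p = scheme_rhs d N D Dxx K J b (u t) p + SAT t p)
      \<longrightarrow> (\<forall>t. ((\<lambda>s. energy d N Hx D R K J a b (u s) (u' s)) has_real_derivative
                 (bformP d N Hx gam (\<lambda>f. u' t) (\<lambda>f p. b p * Dn d N D Dh K J gam f (u t) p)
                  + qf (grid d N) (u' t) (kall d Hx) (SAT t))) (at t)))
   \<and> (\<forall>(u :: real \<Rightarrow> gfun) u' u''.
        (\<forall>p\<in>grid d N. \<forall>t. ((\<lambda>s. u s p) has_real_derivative u' t p) (at t)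
                        \<and> ((\<lambda>s. u' s p) has_real_derivative u'' t p) (at t)
                        \<and> isCont (\<lambda>s. u'' s p) t)
      \<and> (\<forall>t. \<forall>p\<in>grid d N. J p * a p * u'' t p = scheme_rhs d N D Dxx K J b (u t) p
                                   + sat_neumann d N Hx D Dh K J b gam (u t) p)
      \<longrightarrow> (\<forall>t. ((\<lambda>s. energy d N Hx D R K J a b (u s) (u' s)) has_real_derivative 0) (at t)))
   \<and> (\<forall>u v. 0 \<le> energy d N Hx D R K J a b u v)"
proof -
  interpret sbp d N Hx D Dh Dxx R
  proof
    show "1 \<le> d" "2 \<le> N" "sbp_first N Hx D" "sbp_second N Hx D Dh Dxx R" "rem_psd N R" using assms by auto
    show "\<And>k l. k < N \<Longrightarrow> l < N \<Longrightarrow> k \<noteq> l \<Longrightarrow> Hx k l = 0" "\<And>k. k < N \<Longrightarrow> 0 < Hx k k"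
      using norm_facts[OF assms(2,3,4)] by auto
  qed
  show ?thesis by (rule MAIN) (use assms in auto)
qed

end
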